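(* Let $f_1,f_2$ be strongly hyperbolic functions. Given $C\in\mathcal{C}^-(f_1,f_2)$ and two points $p\in C$, $q\notin C$ with $q$ not parallel to $p$, there exists $D\in\mathcal{C}^-(f_1,f_2)$ with $p,q\in D$ and $C\cap D=\{p\}$.
   Context: Identify $\mathbb{S}^1$ with $\mathbb{R}\cup\{\infty\}$, $\mathcal{P}=\mathbb{S}^1\times\mathbb{S}^1$, $\mathbb{R}^+=(0,\infty)$. Two points of $\mathcal{P}$ are parallel if they have the same first coordinate or the same second coordinate. A function $f:\mathbb{R}^+\to\mathbb{R}^+$ is strongly hyperbolic if: (1) $\lim_{x\to0+}f(x)=+\infty$, $\lim_{x\to+\infty}f(x)=0$; (2) $f$ strictly convex; (3) $\lim_{x\to+\infty}f(x+b)/f(x)=1$ for each $b\in\mathbb{R}$; (4) $f$ differentiable; (5) $\ln|f'|$ strictly convex. For $a>0$, $b,c\in\mathbb{R}$: $f_{a,b,c}(x)=af_1(x+b)+c$ for $x>-b$, $f_{a,b,c}(x)=-af_2(-x-b)+c$ for $x<-b$; $\overline{f_{a,b,c}}=\{(x,f_{a,b,c}(x)):x\ne-b\}\cup\{(-b,\infty),(\infty,c)\}$; $\overline{l_{s,t}}=\{(x,sx+t):x\in\mathbb{R}\}\cup\{(\infty,\infty)\}$; $\mathcal{C}^-(f_1,f_2)=\{\overline{f_{a,b,c}}:a>0,b,c\in\mathbb{R}\}\cup\{\overline{l_{s,t}}:s<0,t\in\mathbb{R}\}$. *)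

theory Defs
  imports "HOL-Analysis.Analysis"
begin

text \<open>The circle S^1 = R \<union> {\<infinity>}.\<close>
datatype circ = R real | Infty

type_synonym point = "circ \<times> circ"

definition parallel :: "point \<Rightarrow> point \<Rightarrow> bool" where
  "parallel p q \<longleftrightarrow> fst p = fst q \<or> snd p = snd q"

definition strictly_convex_on :: "real set \<Rightarrow> (real \<Rightarrow> real) \<Rightarrow> bool" where
  "strictly_convex_on S f \<longleftrightarrow> convex S \<and>
    (\<forall>x\<in>S. \<forall>y\<in>S. \<forall>u. x \<noteq> y \<longrightarrow> 0 < u \<longrightarrow> u < 1 \<longrightarrow>
       f (u * x + (1 - u) * y) < u * f x + (1 - u) * f y)"

text \<open>f : R+ \<rightarrow> R+ is represented by a function real \<Rightarrow> real whose values
  outside (0,\<infinity>) are irrelevant.\<close>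
definition strongly_hyperbolic :: "(real \<Rightarrow> real) \<Rightarrow> bool" where
  "strongly_hyperbolic f \<longleftrightarrow>
     (\<forall>x>0. f x > 0) \<and>
     filterlim f at_top (at_right 0) \<and>
     (f \<longlongrightarrow> 0) at_top \<and>
     strictly_convex_on {0<..} f \<and>
     (\<forall>b. ((\<lambda>x. f (x + b) / f x) \<longlongrightarrow> 1) at_top) \<and>
     (\<forall>x>0. f differentiable (at x)) \<and>
     strictly_convex_on {0<..} (\<lambda>x. ln \<bar>deriv f x\<bar>)"

definition fabc :: "(real \<Rightarrow> real) \<Rightarrow> (real \<Rightarrow> real) \<Rightarrow> real \<Rightarrow> real \<Rightarrow> real \<Rightarrow> real \<Rightarrow> real" where
  "fabc f1 f2 a b c x = (if x > - b then a * f1 (x + b) + c else - a * f2 (- x - b) + c)"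

definition curve_f :: "(real \<Rightarrow> real) \<Rightarrow> (real \<Rightarrow> real) \<Rightarrow> real \<Rightarrow> real \<Rightarrow> real \<Rightarrow> point set" where
  "curve_f f1 f2 a b c =
     {(R x, R (fabc f1 f2 a b c x)) | x. x \<noteq> - b} \<union> {(R (- b), Infty), (Infty, R c)}"

definition curve_l :: "real \<Rightarrow> real \<Rightarrow> point set" where
  "curve_l s t = {(R x, R (s * x + t)) | x. True} \<union> {(Infty, Infty)}"

definition Cminus :: "(real \<Rightarrow> real) \<Rightarrow> (real \<Rightarrow> real) \<Rightarrow> point set set" where
  "Cminus f1 f2 =
     {curve_f f1 f2 a b c | a b c. a > 0} \<union> {curve_l s t | s t. s < 0}"

end

theory Submission
  imports Defs
begin


lemma scD: fixes f :: "real \<Rightarrow> real" assumes "strictly_convex_on S f" "x \<in> S" "y \<in> S" "x \<noteq> y" "0 < u" "u < 1"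
  shows "f (u * x + (1 - u) * y) < u * f x + (1 - u) * f y"
  using assms unfolding strictly_convex_on_def by blast

lemma sc_convex:
  fixes f :: "real \<Rightarrow> real"
  assumes "strictly_convex_on S f" shows "convex_on S f"
proof (rule convex_onI)
  show "convex S" using assms unfolding strictly_convex_on_def by auto
  fix t x y :: real assume t: "0 < t" "t < 1" and xy: "x \<in> S" "y \<in> S"
  show "f ((1 - t) *\<^sub>R x + t *\<^sub>R y) \<le> (1 - t) * f x + t * f y"
  proof (cases "x = y")
    case True then show ?thesis by (simp add: algebra_simps)
  next
    case False
    then have "f ((1-t) * x + (1 - (1-t)) * y) < (1-t) * f x + (1 - (1-t)) * f y"
      using scD[OF assms xy False, of "1-t"] t by simp
    then show ?thesis by simp
  qed
qed

locale shf =
  fixes f :: "real \<Rightarrow> real"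
  assumes sh: "strongly_hyperbolic f"
begin

lemma pos: "x > 0 \<Longrightarrow> f x > 0"
  using sh unfolding strongly_hyperbolic_def by auto

lemma lim0: "filterlim f at_top (at_right 0)"
  using sh unfolding strongly_hyperbolic_def by auto

lemma liminf: "(f \<longlongrightarrow> 0) at_top"
  using sh unfolding strongly_hyperbolic_def by auto

lemma scf: "strictly_convex_on {0<..} f"
  using sh unfolding strongly_hyperbolic_def by auto

lemma ratio: "((\<lambda>x. f (x + b) / f x) \<longlongrightarrow> 1) at_top"
  using sh unfolding strongly_hyperbolic_def by auto

lemma scd: "strictly_convex_on {0<..} (\<lambda>x. ln \<bar>deriv f x\<bar>)"
  using sh unfolding strongly_hyperbolic_def by auto

lemma der: "x > 0 \<Longrightarrow> (f has_real_derivative deriv f x) (at x)"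
  using sh unfolding strongly_hyperbolic_def
  by (simp add: DERIV_deriv_iff_real_differentiable)

lemma cont: "x > 0 \<Longrightarrow> isCont f x"
  using der DERIV_isCont by blast

lemma tangent: assumes "x > 0" "y > 0" shows "f y \<ge> f x + deriv f x * (y - x)"
proof -
  have "f y - f x \<ge> deriv f x * (y - x)"
    apply (rule convex_on_imp_above_tangent[where A="{0<..}"])
    using sc_convex[OF scf] assms der[OF assms(1)]
    by (auto simp: interior_open has_field_derivative_at_within)
  then show ?thesis by simp
qed

lemma tangent_strict: assumes "x > 0" "y > 0" "y \<noteq> x"
  shows "f y > f x + deriv f x * (y - x)"
proof -
  define m where "m = (x + y) / 2"
  have m: "m > 0" using assms by (simp add: m_def)
  have "f ((1/2) * x + (1 - 1/2) * y) < (1/2) * f x + (1 - 1/2) * f y"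
    using scD[OF scf, of x y "1/2"] assms by auto
  then have "f m < (f x + f y) / 2" by (simp add: m_def field_simps)
  moreover have "f m \<ge> f x + deriv f x * (m - x)" using tangent[OF assms(1) m] .
  ultimately have "f x + deriv f x * (m - x) < (f x + f y)/2" by linarith
  moreover have "m - x = (y - x) / 2" by (simp add: m_def field_simps)
  ultimately show ?thesis by (simp add: field_simps)
qed

lemma deriv_mono: assumes "0 < x" "x < y" shows "deriv f x < deriv f y"
proof -
  have "f y > f x + deriv f x * (y - x)" using tangent_strict assms by auto
  moreover have "f x > f y + deriv f y * (x - y)" using tangent_strict assms by auto
  ultimately have "(deriv f y - deriv f x) * (y - x) > 0" by (simp add: algebra_simps)
  with assms show ?thesis by (simp add: zero_less_mult_iff)
qed

lemma deriv_neg: assumes "x > 0" shows "deriv f x < 0"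
proof (rule ccontr)
  assume "\<not> deriv f x < 0"
  then have d: "deriv f x \<ge> 0" by simp
  have A: "\<forall>y>x. f y \<ge> f x"
  proof (intro allI impI)
    fix y assume "y > x"
    then have "f y \<ge> f x + deriv f x * (y - x)" using tangent assms by auto
    moreover have "deriv f x * (y - x) \<ge> 0" using d \<open>y > x\<close> by simp
    ultimately show "f y \<ge> f x" by linarith
  qed
  moreover have "eventually (\<lambda>y. f y < f x) at_top"
    using liminf pos[OF assms] by (simp add: order_tendstoD(2))
  moreover have "eventually (\<lambda>y. y > x) at_top" by (rule eventually_gt_at_top)
  ultimately have "eventually (\<lambda>y. f y < f x \<and> y > x) at_top"
    by (simp add: eventually_conj)
  then obtain N where "\<forall>y\<ge>N. f y < f x \<and> y > x" by (auto simp: eventually_at_top_linorder)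
  then show False using A by (meson linorder_not_le order_refl)
qed

lemma strict_dec: assumes "0 < x" "x < y" shows "f y < f x"
proof -
  have "f x > f y + deriv f y * (x - y)" using tangent_strict assms by auto
  moreover have "deriv f y * (x - y) > 0" using deriv_neg[of y] assms by (simp add: mult_neg_neg)
  ultimately show ?thesis by linarith
qed


lemma dcont_on: "continuous_on {0<..} (deriv f)"
proof -
  have c: "convex_on {0<..} (\<lambda>x. ln \<bar>deriv f x\<bar>)" by (rule sc_convex[OF scd])
  have "continuous_on {0<..} (\<lambda>x. ln \<bar>deriv f x\<bar>)"
    by (rule convex_on_continuous[OF open_greaterThan c])
  then have c2: "continuous_on {0<..} (\<lambda>x. - exp (ln \<bar>deriv f x\<bar>))"
    by (intro continuous_on_minus continuous_on_exp)
  have eq: "\<And>x. x \<in> {0<..} \<Longrightarrow> - exp (ln \<bar>deriv f x\<bar>) = deriv f x"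
  proof -
    fix x :: real assume "x \<in> {0<..}"
    then have "deriv f x < 0" using deriv_neg by simp
    then show "- exp (ln \<bar>deriv f x\<bar>) = deriv f x" by simp
  qed
  have "continuous_on {0<..} (\<lambda>x. - exp (ln \<bar>deriv f x\<bar>)) = continuous_on {0<..} (deriv f)"
    by (rule continuous_on_cong[OF refl eq])
  with c2 show ?thesis by simp
qed

lemma dcont: "x > 0 \<Longrightarrow> isCont (deriv f) x"
  using continuous_on_eq_continuous_at[OF open_greaterThan, of 0 "deriv f"] dcont_on by simp

lemma shift_tendsto0: "((\<lambda>z. f (z + d)) \<longlongrightarrow> 0) at_top"
proof -
  have "filterlim (\<lambda>z. z + d) at_top at_top"
    by (rule filterlim_tendsto_add_at_top[OF tendsto_const filterlim_ident, simplified add.commute])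
  then show ?thesis using filterlim_compose[OF liminf] by blast
qed

lemma small: "\<exists>v0>0. \<forall>v. 0 < v \<and> v < v0 \<longrightarrow> f v > K"
proof -
  have "eventually (\<lambda>v. f v > K) (at_right 0)"
    using lim0 by (simp add: filterlim_at_top_dense)
  then show ?thesis by (auto simp: eventually_at_right_field)
qed

lemma dsmall: "\<exists>z0>0. \<forall>z. 0 < z \<and> z < z0 \<longrightarrow> - deriv f z > K"
proof -
  obtain v0 where v0: "v0 > 0" "\<forall>v. 0 < v \<and> v < v0 \<longrightarrow> f v > \<bar>K\<bar> + f 1"
    using small by blast
  show ?thesis
  proof (intro exI[of _ "min v0 1"] conjI allI impI)
    show "min v0 1 > 0" using v0 by simp
    fix z assume z: "0 < z \<and> z < min v0 1"
    have "f 1 \<ge> f z + deriv f z * (1 - z)" using tangent[of z 1] z by simp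
    moreover have "f z > \<bar>K\<bar> + f 1" using v0 z by simp
    moreover have "deriv f z < 0" using deriv_neg z by simp
    moreover have "- deriv f z * (1 - z) \<le> - deriv f z"
      using z \<open>deriv f z < 0\<close> by (simp add: mult_le_cancel_left1)
    moreover have "- deriv f z * (1 - z) = -(deriv f z * (1 - z))" by simp
    ultimately show "- deriv f z > K" by linarith
  qed
qed

lemma rsmall: assumes "e > 0"
  shows "\<exists>z0>0. \<forall>z. 0 < z \<and> z < z0 \<longrightarrow> f z < e * (- deriv f z)"
proof -
  define v where "v = e / 2"
  have v: "v > 0" using assms by (simp add: v_def)
  obtain z1 where z1: "z1 > 0" "\<forall>z. 0 < z \<and> z < z1 \<longrightarrow> - deriv f z > 2 * f v / e"
    using dsmall by blast
  show ?thesis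
  proof (intro exI[of _ "min z1 v"] conjI allI impI)
    show "min z1 v > 0" using z1 v by simp
    fix z assume z: "0 < z \<and> z < min z1 v"
    have "f v \<ge> f z + deriv f z * (v - z)" using tangent[of z v] z v by simp
    then have "f z \<le> f v + (- deriv f z) * (v - z)" by (simp add: algebra_simps)
    also have "\<dots> < f v + (- deriv f z) * v"
      using z deriv_neg[of z] by (simp add: mult_less_cancel_left)
    also have "f v < (e/2) * (- deriv f z)"
      using z1 z assms by (simp add: field_simps)
    then have "f v + (- deriv f z) * v < e * (- deriv f z)"
      by (simp add: v_def field_simps)
    finally show "f z < e * (- deriv f z)" .
  qed
qed

lemma rbig: assumes "K > 0" shows "\<exists>z>0. f z > K * (- deriv f z)"
proof -
  have "eventually (\<lambda>x. f (x + -1) / f x < 1 + 1 / K) at_top"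
    using ratio[of "-1"] assms by (intro order_tendstoD(2)) auto
  then obtain N where N: "\<forall>x\<ge>N. f (x + -1) / f x < 1 + 1 / K"
    by (auto simp: eventually_at_top_linorder)
  define z where "z = max N 2"
  have z: "z \<ge> N" "z > 1" by (auto simp: z_def)
  have fz: "f z > 0" using pos z by simp
  have "f (z - 1) < (1 + 1/K) * f z" using N z fz by (simp add: divide_less_eq)
  moreover have "f (z - 1) \<ge> f z + deriv f z * ((z - 1) - z)" using tangent[of z "z-1"] z by simp
  ultimately have "- deriv f z < f z / K" by (simp add: field_simps)
  then show ?thesis using z assms by (intro exI[of _ z]) (auto simp: field_simps)
qed

lemma dratio: assumes "d > 0" "L < 1"
  shows "\<exists>z>0. - deriv f (z + d) > L * (- deriv f z)"
proof (rule ccontr)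
  assume "\<not> ?thesis"
  then have H: "\<And>z. z > 0 \<Longrightarrow> deriv f (z + d) - L * deriv f z \<ge> 0" by force
  define u where "u z = f (z + d) - L * f z" for z
  have mono: "u a \<le> u b" if "0 < a" "a \<le> b" for a b
  proof (rule DERIV_nonneg_imp_nondecreasing[OF that(2)])
    fix x assume x: "a \<le> x" "x \<le> b"
    then have x0: "x > 0" using that by simp
    have "((\<lambda>x. f (x + d)) has_real_derivative deriv f (x + d)) (at x)"
      using der[of "x + d"] x0 assms DERIV_shift by force
    moreover have "((\<lambda>z. L * f z) has_real_derivative L * deriv f x) (at x)"
      using DERIV_cmult[OF der[OF x0]] by simp
    ultimately have "(u has_real_derivative deriv f (x + d) - L * deriv f x) (at x)"
      unfolding u_def by (rule DERIV_diff)
    then show "\<exists>y. (u has_real_derivative y) (at x) \<and> y \<ge> 0" using H[OF x0] by blast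
  qed
  have ulim: "(u \<longlongrightarrow> 0) at_top"
    unfolding u_def using tendsto_diff[OF shift_tendsto0[of d] tendsto_mult[OF tendsto_const[of L] liminf]]
    by simp
  have upos: "u z \<le> 0" if "z > 0" for z
  proof (rule ccontr)
    assume "\<not> u z \<le> 0"
    then have "eventually (\<lambda>y. u y < u z) at_top" using ulim by (intro order_tendstoD(2)) auto
    then obtain N where "\<forall>y\<ge>N. u y < u z" by (auto simp: eventually_at_top_linorder)
    then have "u (max N z) < u z" by simp
    moreover have "u z \<le> u (max N z)" using mono that by simp
    ultimately show False by simp
  qed
  have "eventually (\<lambda>x. f (x + d) / f x > L) at_top"
    using ratio[of d] assms by (intro order_tendstoD(1)) auto
  then obtain N where N: "\<forall>x\<ge>N. f (x + d) / f x > L" by (auto simp: eventually_at_top_linorder)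
  define z where "z = max N 1"
  have z: "z \<ge> N" "z > 0" by (auto simp: z_def)
  have "f (z + d) / f z > L" using N z by simp
  then have "f (z + d) > L * f z" using pos[of z] z by (simp add: field_simps)
  then show False using upos[OF z(2)] by (simp add: u_def)
qed


lemma cont_shift: "x + d > 0 \<Longrightarrow> isCont (\<lambda>z. f (z + d)) x"
proof -
  assume "x + d > 0"
  then have "((\<lambda>z. f (z + d)) has_real_derivative deriv f (x + d)) (at x)"
    using der[of "x + d"] DERIV_shift by force
  then show ?thesis by (rule DERIV_isCont)
qed

lemma cont_refl: "e - x > 0 \<Longrightarrow> isCont (\<lambda>z. f (e - z)) x"
proof -
  assume "e - x > 0"
  have "((\<lambda>z. e - z) has_real_derivative -1) (at x)" by (auto intro!: derivative_eq_intros)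
  then have "((\<lambda>z. f (e - z)) has_real_derivative deriv f (e - x) * -1) (at x)"
    using DERIV_chain2[where g="\<lambda>z. e - z" and x=x, OF der[OF \<open>e - x > 0\<close>]] by blast
  then show ?thesis by (rule DERIV_isCont)
qed

lemma three_chord:
  assumes "0 < u" "u < v" "v < w"
  shows "ln \<bar>deriv f v\<bar> * (w - u) < (w - v) * ln \<bar>deriv f u\<bar> + (v - u) * ln \<bar>deriv f w\<bar>"
proof -
  define l where "l = (w - v) / (w - u)"
  have l: "0 < l" "l < 1" using assms by (auto simp: l_def field_simps)
  have lw: "l * (w - u) = w - v" using assms by (simp add: l_def)
  have "l * u + (1 - l) * w = w - l * (w - u)" by (simp add: algebra_simps)
  then have vv: "l * u + (1 - l) * w = v" using lw by simp
  have "ln \<bar>deriv f (l * u + (1 - l) * w)\<bar> < l * ln \<bar>deriv f u\<bar> + (1 - l) * ln \<bar>deriv f w\<bar>"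
    using scD[OF scd, of u w l] assms l by auto
  then have "ln \<bar>deriv f v\<bar> < l * ln \<bar>deriv f u\<bar> + (1 - l) * ln \<bar>deriv f w\<bar>" by (simp add: vv)
  then have "ln \<bar>deriv f v\<bar> * (w - u) < (l * ln \<bar>deriv f u\<bar> + (1 - l) * ln \<bar>deriv f w\<bar>) * (w - u)"
    using assms by simp
  also have "\<dots> = (l * (w - u)) * ln \<bar>deriv f u\<bar> + ((1 - l) * (w - u)) * ln \<bar>deriv f w\<bar>"
    by (simp add: algebra_simps)
  also have "(1 - l) * (w - u) = v - u" using lw by (simp add: algebra_simps)
  finally show ?thesis using lw by simp
qed

definition sl where "sl u v = (ln \<bar>deriv f v\<bar> - ln \<bar>deriv f u\<bar>) / (v - u)"

lemma sl1: assumes "0 < u" "u < v" "v < w" shows "sl u v < sl u w"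
proof -
  have "ln \<bar>deriv f v\<bar> * (w - u) < (w - v) * ln \<bar>deriv f u\<bar> + (v - u) * ln \<bar>deriv f w\<bar>"
    using three_chord[OF assms] .
  then show ?thesis using assms unfolding sl_def by (simp add: field_simps)
qed

lemma sl2: assumes "0 < u" "u < v" "v < w" shows "sl u w < sl v w"
proof -
  have "ln \<bar>deriv f v\<bar> * (w - u) < (w - v) * ln \<bar>deriv f u\<bar> + (v - u) * ln \<bar>deriv f w\<bar>"
    using three_chord[OF assms] .
  then show ?thesis using assms unfolding sl_def by (simp add: field_simps)
qed

lemma logchord:
  assumes "0 < A" "A < X" "d > 0"
  shows "deriv f A * deriv f (X + d) > deriv f (A + d) * deriv f X"
proof -
  have "sl A (A + d) < sl X (X + d)"
  proof (cases X "A + d" rule: linorder_cases)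
    case less
    then have "sl A (A + d) < sl X (A + d)" using sl1 sl2 assms by (meson order.strict_trans)
    also have "\<dots> < sl X (X + d)" using sl1[of X "A + d" "X + d"] assms less by simp
    finally show ?thesis .
  next
    case equal
    then show ?thesis using sl1[of A "A + d" "X + d"] sl2[of A "A + d" "X + d"] assms by simp
  next
    case greater
    then have "sl A (A + d) < sl (A + d) X" using sl1[of A "A + d" X] sl2[of A "A + d" X] assms by simp
    also have "\<dots> < sl X (X + d)" using sl1[of "A + d" X "X + d"] sl2[of "A + d" X "X + d"] assms greater
      by (meson order.strict_trans add_pos_pos less_add_same_cancel1)
    finally show ?thesis .
  qed
  then have "ln \<bar>deriv f (A + d)\<bar> - ln \<bar>deriv f A\<bar> < ln \<bar>deriv f (X + d)\<bar> - ln \<bar>deriv f X\<bar>"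
    using assms unfolding sl_def by (simp add: divide_less_cancel)
  moreover have n: "deriv f A < 0" "deriv f X < 0" "deriv f (A + d) < 0" "deriv f (X + d) < 0"
    using deriv_neg assms by auto
  moreover have "ln (\<bar>deriv f (A + d)\<bar> * \<bar>deriv f X\<bar>) = ln \<bar>deriv f (A + d)\<bar> + ln \<bar>deriv f X\<bar>"
    by (rule ln_mult_pos) (use n in auto)
  moreover have "ln (\<bar>deriv f (X + d)\<bar> * \<bar>deriv f A\<bar>) = ln \<bar>deriv f (X + d)\<bar> + ln \<bar>deriv f A\<bar>"
    by (rule ln_mult_pos) (use n in auto)
  ultimately have "ln (\<bar>deriv f (A + d)\<bar> * \<bar>deriv f X\<bar>) < ln (\<bar>deriv f (X + d)\<bar> * \<bar>deriv f A\<bar>)"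
    by linarith
  then have "\<bar>deriv f (A + d)\<bar> * \<bar>deriv f X\<bar> < \<bar>deriv f (X + d)\<bar> * \<bar>deriv f A\<bar>"
    using n by (simp add: zero_less_mult_iff)
  then show ?thesis using n by (simp add: mult_neg_neg abs_of_neg mult.commute)
qed

end

lemma ivt_int:
  fixes g :: "real \<Rightarrow> real"
  assumes c: "\<And>x. A < x \<Longrightarrow> x < B \<Longrightarrow> isCont g x"
    and uv: "A < u" "u < B" "A < v" "v < B" "g u \<le> K" "K \<le> g v"
  shows "\<exists>x. A < x \<and> x < B \<and> g x = K"
proof (cases "u \<le> v")
  case True
  have "continuous_on {u..v} g" using c uv by (intro continuous_at_imp_continuous_on) auto
  then obtain x where "u \<le> x" "x \<le> v" "g x = K" using IVT'[of g u K v] uv True by blast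
  then show ?thesis using uv by (intro exI[of _ x]) auto
next
  case False
  have "continuous_on {v..u} g" using c uv by (intro continuous_at_imp_continuous_on) auto
  then obtain x where "v \<le> x" "x \<le> u" "g x = K" using IVT2'[of g u K v] uv False by force
  then show ?thesis using uv by (intro exI[of _ x]) auto
qed


context shf begin

lemma quot_cont:
  assumes "x > 0" "isCont N x" shows "isCont (\<lambda>z. N z / (- deriv f z)) x"
  by (rule isCont_divide[OF assms(2) isCont_minus[OF dcont[OF assms(1)]]]) (use deriv_neg[OF assms(1)] in simp)

lemma solve_r: assumes "k > 0" shows "\<exists>z>0. f z = k * (- deriv f z)"
proof -
  define g where "g z = f z / (- deriv f z)" for z
  obtain z0 where z0: "z0 > 0" "\<forall>z. 0 < z \<and> z < z0 \<longrightarrow> f z < k * (- deriv f z)"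
    using rsmall[OF assms] by blast
  define u where "u = z0 / 2"
  have u0: "u > 0" "u < z0" using z0 by (auto simp: u_def)
  have "g u \<le> k" unfolding g_def pos_divide_le_eq[OF neg_0_less_iff_less[THEN iffD2, OF deriv_neg[OF u0(1)]]]
    using z0 u0 by auto
  note u = u0(1) this
  obtain v where v: "v > 0" "f v > k * (- deriv f v)" using rbig[OF assms] by blast
  have gv: "g v \<ge> k" unfolding g_def pos_le_divide_eq[OF neg_0_less_iff_less[THEN iffD2, OF deriv_neg[OF v(1)]]]
    using v by auto
  have c: "isCont g x" if "0 < x" for x
    unfolding g_def using that by (intro quot_cont cont)
  have "\<exists>x. 0 < x \<and> x < max u v + 1 \<and> g x = k"
    by (rule ivt_int[of 0 "max u v + 1" g u v k]) (use c u v gv in auto)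
  then obtain x where x: "0 < x" "x < max u v + 1" "g x = k" by blast
  then show ?thesis using deriv_neg[of x] by (intro exI[of _ x]) (auto simp: g_def field_simps)
qed

lemma solve_phi: assumes "d > 0" "0 < k" "k < d"
  shows "\<exists>z>0. f z - f (z + d) = k * (- deriv f z)"
proof -
  define g where "g z = (f z - f (z + d)) / (- deriv f z)" for z
  obtain z0 where z0: "z0 > 0" "\<forall>z. 0 < z \<and> z < z0 \<longrightarrow> f z < k * (- deriv f z)"
    using rsmall[OF assms(2)] by blast
  define u where "u = z0 / 2"
  have u0: "u > 0" "f (u + d) > 0" "u < z0" using z0 assms pos[of "u + d"] by (auto simp: u_def)
  have "g u \<le> k" unfolding g_def pos_divide_le_eq[OF neg_0_less_iff_less[THEN iffD2, OF deriv_neg[OF u0(1)]]]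
    using z0 u0 by auto
  note u = u0(1) this
  obtain v where v: "v > 0" "- deriv f (v + d) > (k / d) * (- deriv f v)"
    using dratio[OF assms(1), of "k / d"] assms by auto
  have "f v \<ge> f (v + d) + deriv f (v + d) * (v - (v + d))" using tangent[of "v + d" v] v assms by simp
  then have "f v - f (v + d) \<ge> d * (- deriv f (v + d))" by (simp add: algebra_simps)
  moreover have "d * (- deriv f (v + d)) > k * (- deriv f v)"
    using v assms by (simp add: field_simps)
  ultimately have gv: "g v \<ge> k" unfolding g_def pos_le_divide_eq[OF neg_0_less_iff_less[THEN iffD2, OF deriv_neg[OF v(1)]]]
    by linarith
  have c: "isCont g x" if "0 < x" for x
    unfolding g_def using that assms by (intro quot_cont isCont_diff cont cont_shift) auto
  have "\<exists>x. 0 < x \<and> x < max u v + 1 \<and> g x = k"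
    by (rule ivt_int[of 0 "max u v + 1" g u v k]) (use c u v gv in auto)
  then obtain x where x: "0 < x" "x < max u v + 1" "g x = k" by blast
  then show ?thesis using deriv_neg[of x] by (intro exI[of _ x]) (auto simp: g_def field_simps)
qed

lemma solve_psi: assumes "d > 0" "k > d"
  shows "\<exists>w>d. f (w - d) - f w = k * (- deriv f w)"
proof -
  define g where "g w = (f (w - d) - f w) / (- deriv f w)" for w
  obtain v0 where v0: "v0 > 0" "\<forall>v. 0 < v \<and> v < v0 \<longrightarrow> f v > f d + k * (- deriv f d)"
    using small by blast
  define v where "v = min v0 d / 2"
  have v: "0 < v" "v < v0" "v < d" using v0 assms by (auto simp: v_def)
  define u where "u = d + v"
  have "deriv f d < deriv f u" using deriv_mono[of d u] v assms by (simp add: u_def)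
  moreover have "f u < f d" using strict_dec[of d u] v assms by (simp add: u_def)
  moreover have "f (u - d) > f d + k * (- deriv f d)" using v0 v by (simp add: u_def)
  moreover have "k * (- deriv f d) > k * (- deriv f u)" using calculation(1) assms by simp
  ultimately have "f (u - d) - f u > k * (- deriv f u)" by linarith
  moreover have u0: "u > 0" "u > d" using v assms by (auto simp: u_def)
  ultimately have "g u \<ge> k" unfolding g_def pos_le_divide_eq[OF neg_0_less_iff_less[THEN iffD2, OF deriv_neg[OF u0(1)]]]
    by linarith
  note u = u0(2) this
  obtain z where z: "z > 0" "- deriv f (z + d) > (d / k) * (- deriv f z)"
    using dratio[OF assms(1), of "d / k"] assms by auto
  have "f (z + d) \<ge> f z + deriv f z * ((z + d) - z)" using tangent[of z "z + d"] z assms by simp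
  then have "f z - f (z + d) \<le> d * (- deriv f z)" by (simp add: algebra_simps)
  moreover have "d * (- deriv f z) < k * (- deriv f (z + d))"
    using z assms by (simp add: field_simps)
  ultimately have "f (z + d - d) - f (z + d) < k * (- deriv f (z + d))" by simp
  moreover have zd: "z + d > 0" using z assms by simp
  ultimately have gz: "g (z + d) \<le> k" unfolding g_def pos_divide_le_eq[OF neg_0_less_iff_less[THEN iffD2, OF deriv_neg[OF zd]]]
    by linarith
  have c: "isCont g x" if "d < x" for x
    unfolding g_def using that assms cont_shift[of x "-d"] by (intro quot_cont isCont_diff cont) auto
  have "\<exists>x. d < x \<and> x < max u (z + d) + 1 \<and> g x = k"
    by (rule ivt_int[of d "max u (z + d) + 1" g "z + d" u k]) (use c u z gz assms in auto)
  then obtain x where x: "d < x" "x < max u (z + d) + 1" "g x = k" by blast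
  then show ?thesis using deriv_neg[of x] assms by (intro exI[of _ x]) (auto simp: g_def field_simps)
qed

end

lemma solve_xi:
  assumes F: "shf F" and G: "shf G" and e: "e > 0" and K: "K > 0"
  shows "\<exists>w. 0 < w \<and> w < e \<and> F w + G (e - w) = K * (- deriv F w)"
proof -
  interpret F: shf F by (rule F)
  interpret G: shf G by (rule G)
  define g where "g w = (F w + G (e - w)) / (- deriv F w)" for w
  obtain z1 where z1: "z1 > 0" "\<forall>z. 0 < z \<and> z < z1 \<longrightarrow> F z < (K/2) * (- deriv F z)"
    using F.rsmall[of "K/2"] K by auto
  obtain z2 where z2: "z2 > 0" "\<forall>z. 0 < z \<and> z < z2 \<longrightarrow> - deriv F z > 2 * G (e/2) / K"
    using F.dsmall by blast
  define u where "u = min (min z1 z2) (e/2) / 2"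
  have u: "0 < u" "u < z1" "u < z2" "u < e / 2" using z1 z2 e by (auto simp: u_def)
  have "F u < (K/2) * (- deriv F u)" using z1 u by simp
  moreover have "G (e/2) < (K/2) * (- deriv F u)" using z2 u K by (simp add: field_simps)
  moreover have "G (e - u) < G (e/2)" using G.strict_dec[of "e/2" "e - u"] u e by simp
  ultimately have "F u + G (e - u) < K * (- deriv F u)" by linarith
  then have gu: "g u \<le> K" unfolding g_def pos_divide_le_eq[OF neg_0_less_iff_less[THEN iffD2, OF F.deriv_neg[OF u(1)]]]
    by linarith
  obtain v0 where v0: "v0 > 0" "\<forall>v. 0 < v \<and> v < v0 \<longrightarrow> G v > K * (- deriv F (e/2))"
    using G.small by blast
  define v where "v = min v0 (e/2) / 2"
  have v: "0 < v" "v < v0" "v < e/2" using v0 e by (auto simp: v_def)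
  have "deriv F (e/2) < deriv F (e - v)" using F.deriv_mono[of "e/2" "e - v"] v e by simp
  then have "K * (- deriv F (e/2)) > K * (- deriv F (e - v))" using K by simp
  moreover have "G (e - (e - v)) > K * (- deriv F (e/2))" using v0 v by simp
  moreover have "F (e - v) > 0" using F.pos v by simp
  ultimately have "F (e - v) + G (e - (e - v)) > K * (- deriv F (e - v))" by linarith
  moreover have ev: "e - v > 0" using v by simp
  ultimately have gv: "g (e - v) \<ge> K" unfolding g_def pos_le_divide_eq[OF neg_0_less_iff_less[THEN iffD2, OF F.deriv_neg[OF ev]]]
    by linarith
  have c: "isCont g x" if "0 < x" "x < e" for x
    unfolding g_def using that by (intro F.quot_cont isCont_add F.cont G.cont_refl) auto
  have "\<exists>x. 0 < x \<and> x < e \<and> g x = K"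
    by (rule ivt_int[of 0 e g u "e - v" K]) (use c u v gu gv in auto)
  then obtain x where x: "0 < x" "x < e" "g x = K" by blast
  then show ?thesis using F.deriv_neg[of x] by (intro exI[of _ x]) (auto simp: g_def field_simps)
qed



lemma mf_RR: "(R x, R y) \<in> curve_f f1 f2 a b c \<longleftrightarrow> x \<noteq> - b \<and> y = fabc f1 f2 a b c x"
  unfolding curve_f_def by auto
lemma mf_RI: "(R x, Infty) \<in> curve_f f1 f2 a b c \<longleftrightarrow> x = - b"
  unfolding curve_f_def by auto
lemma mf_IR: "(Infty, R y) \<in> curve_f f1 f2 a b c \<longleftrightarrow> y = c"
  unfolding curve_f_def by auto
lemma mf_II: "(Infty, Infty) \<notin> curve_f f1 f2 a b c"
  unfolding curve_f_def by auto
lemma ml_RR: "(R x, R y) \<in> curve_l s t \<longleftrightarrow> y = s * x + t"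
  unfolding curve_l_def by auto
lemma ml_RI: "(R x, Infty) \<notin> curve_l s t"
  unfolding curve_l_def by auto
lemma ml_IR: "(Infty, R y) \<notin> curve_l s t"
  unfolding curve_l_def by auto
lemma ml_II: "(Infty, Infty) \<in> curve_l s t"
  unfolding curve_l_def by auto

lemmas mem_simps = mf_RR mf_RI mf_IR mf_II ml_RR ml_RI ml_IR ml_II

lemma fabc_right: "x > - b \<Longrightarrow> fabc f1 f2 a b c x = a * f1 (x + b) + c"
  unfolding fabc_def by simp
lemma fabc_left: "x < - b \<Longrightarrow> fabc f1 f2 a b c x = - a * f2 (- x - b) + c"
  unfolding fabc_def by simp

lemma int_single:
  assumes "p \<in> C" "p \<in> D"
    and RR: "\<And>x y. (R x, R y) \<in> C \<Longrightarrow> (R x, R y) \<in> D \<Longrightarrow> (R x, R y) = p"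
    and RI: "\<And>x. (R x, Infty) \<in> C \<Longrightarrow> (R x, Infty) \<in> D \<Longrightarrow> (R x, Infty) = p"
    and IR: "\<And>y. (Infty, R y) \<in> C \<Longrightarrow> (Infty, R y) \<in> D \<Longrightarrow> (Infty, R y) = p"
    and II: "(Infty, Infty) \<in> C \<Longrightarrow> (Infty, Infty) \<in> D \<Longrightarrow> (Infty, Infty) = p"
  shows "C \<inter> D = {p}"
proof
  show "{p} \<subseteq> C \<inter> D" using assms by auto
  show "C \<inter> D \<subseteq> {p}"
  proof
    fix pt assume pt: "pt \<in> C \<inter> D"
    obtain u v where uv: "pt = (u, v)" by (cases pt)
    show "pt \<in> {p}"
      using pt RR RI IR II unfolding uv by (cases u; cases v) auto
  qed
qed

lemma witness: assumes "D \<in> M" "q \<in> D" "C \<inter> D = {p}"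
  shows "\<exists>D\<in>M. p \<in> D \<and> q \<in> D \<and> C \<inter> D = {p}"
proof (rule bexI[OF _ assms(1)])
  have "p \<in> D" using assms(3) by blast
  then show "p \<in> D \<and> q \<in> D \<and> C \<inter> D = {p}" using assms(2,3) by simp
qed

lemma cf_in: "a > 0 \<Longrightarrow> curve_f f1 f2 a b c \<in> Cminus f1 f2"
  unfolding Cminus_def by blast
lemma cl_in: "s < 0 \<Longrightarrow> curve_l s t \<in> Cminus f1 f2"
  unfolding Cminus_def by blast

locale SH = F1: shf f1 + F2: shf f2 for f1 f2
begin

definition RT where
  "RT x0 y0 s z = curve_f f1 f2 (s / deriv f1 z) (z - x0) (y0 - s / deriv f1 z * f1 z)"
definition LT where
  "LT x0 y0 s w = curve_f f1 f2 (s / deriv f2 w) (- x0 - w) (y0 + s / deriv f2 w * f2 w)"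

lemma RT_in: "s < 0 \<Longrightarrow> z > 0 \<Longrightarrow> RT x0 y0 s z \<in> Cminus f1 f2"
  unfolding RT_def using F1.deriv_neg[of z] by (intro cf_in) (simp add: divide_neg_neg)
lemma LT_in: "s < 0 \<Longrightarrow> w > 0 \<Longrightarrow> LT x0 y0 s w \<in> Cminus f1 f2"
  unfolding LT_def using F2.deriv_neg[of w] by (intro cf_in) (simp add: divide_neg_neg)

lemma RT_right: "z > 0 \<Longrightarrow> x > x0 - z \<Longrightarrow>
   (R x, R y) \<in> RT x0 y0 s z \<longleftrightarrow> y = y0 + s / deriv f1 z * (f1 (x - x0 + z) - f1 z)"
  unfolding RT_def mf_RR using fabc_right[of "z - x0" x f1 f2 "s / deriv f1 z" "y0 - s / deriv f1 z * f1 z"]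
  by (auto simp: algebra_simps)

lemma RT_left: "z > 0 \<Longrightarrow> x < x0 - z \<Longrightarrow>
   (R x, R y) \<in> RT x0 y0 s z \<longleftrightarrow> y = y0 - s / deriv f1 z * (f2 (x0 - z - x) + f1 z)"
  unfolding RT_def mf_RR using fabc_left[of x "z - x0" f1 f2 "s / deriv f1 z" "y0 - s / deriv f1 z * f1 z"]
  by (auto simp: algebra_simps)

lemma LT_right: "w > 0 \<Longrightarrow> x > x0 + w \<Longrightarrow>
   (R x, R y) \<in> LT x0 y0 s w \<longleftrightarrow> y = y0 + s / deriv f2 w * (f1 (x - x0 - w) + f2 w)"
  unfolding LT_def mf_RR using fabc_right[of "- x0 - w" x f1 f2 "s / deriv f2 w" "y0 + s / deriv f2 w * f2 w"]
  by (auto simp: algebra_simps)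

lemma LT_left: "w > 0 \<Longrightarrow> x < x0 + w \<Longrightarrow>
   (R x, R y) \<in> LT x0 y0 s w \<longleftrightarrow> y = y0 + s / deriv f2 w * (f2 w - f2 (x0 + w - x))"
  unfolding LT_def mf_RR using fabc_left[of x "- x0 - w" f1 f2 "s / deriv f2 w" "y0 + s / deriv f2 w * f2 w"]
  by (auto simp: algebra_simps)


lemma qalg: fixes D s k :: real shows "D \<noteq> 0 \<Longrightarrow> s / D * (k * - D) = - (s * k)"
  by (simp add: field_simps)

lemma cover_RI: assumes "s < 0" "x1 \<noteq> x0"
  shows "(\<exists>z>0. (R x1, Infty) \<in> RT x0 y0 s z) \<or> (\<exists>w>0. (R x1, Infty) \<in> LT x0 y0 s w)"
proof (cases "x1 < x0")
  case True
  then show ?thesis by (intro disjI1 exI[of _ "x0 - x1"]) (simp add: RT_def mf_RI)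
next
  case False
  then show ?thesis using assms by (intro disjI2 exI[of _ "x1 - x0"]) (simp add: LT_def mf_RI)
qed

lemma cover_IR: assumes s: "s < 0" and "y1 \<noteq> y0"
  shows "(\<exists>z>0. (Infty, R y1) \<in> RT x0 y0 s z) \<or> (\<exists>w>0. (Infty, R y1) \<in> LT x0 y0 s w)"
proof (cases "y1 < y0")
  case True
  obtain z where z: "z > 0" "f1 z = ((y0 - y1) / - s) * (- deriv f1 z)"
    using F1.solve_r[of "(y0 - y1) / - s"] True s by (auto simp del: divide_minus_right)
  have "s / deriv f1 z * f1 z = - (s * ((y0 - y1) / - s))"
    unfolding z(2) by (rule qalg) (use F1.deriv_neg[OF z(1)] in simp)
  also have "\<dots> = y0 - y1" using s by simp
  finally show ?thesis using z by (intro disjI1 exI[of _ z]) (simp add: RT_def mf_IR)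
next
  case False
  then have "y1 > y0" using assms by simp
  obtain w where w: "w > 0" "f2 w = ((y1 - y0) / - s) * (- deriv f2 w)"
    using F2.solve_r[of "(y1 - y0) / - s"] \<open>y1 > y0\<close> s by (auto simp del: divide_minus_right)
  have "s / deriv f2 w * f2 w = - (s * ((y1 - y0) / - s))"
    unfolding w(2) by (rule qalg) (use F2.deriv_neg[OF w(1)] in simp)
  also have "\<dots> = y1 - y0" using s by simp
  finally show ?thesis using w by (intro disjI2 exI[of _ w]) (simp add: LT_def mf_IR)
qed

lemma cover_RR: assumes s: "s < 0" and "x1 \<noteq> x0" "y1 \<noteq> y0"
  shows "(R x1, R y1) \<in> curve_l s (y0 - s * x0) \<or> (\<exists>z>0. (R x1, R y1) \<in> RT x0 y0 s z)
     \<or> (\<exists>w>0. (R x1, R y1) \<in> LT x0 y0 s w)"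
proof -
  define d where "d = x1 - x0"
  have sh1: "shf f1" "shf f2" by unfold_locales
  consider "d > 0" "y1 > y0" | "d < 0" "y1 < y0" | "d > 0" "y1 < y0" | "d < 0" "y1 > y0"
    using assms unfolding d_def by linarith
  then show ?thesis
  proof cases
    case 1
    obtain w where w: "0 < w" "w < d" "f2 w + f1 (d - w) = ((y1 - y0) / - s) * (- deriv f2 w)"
      using solve_xi[OF sh1(2) sh1(1), of d "(y1 - y0) / - s"] 1 s by (auto simp del: divide_minus_right)
    have "s / deriv f2 w * (f1 (x1 - x0 - w) + f2 w) = - (s * ((y1 - y0) / - s))"
      unfolding d_def[symmetric] add.commute[of "f1 (d - w)"] w(3)
      by (rule qalg) (use F2.deriv_neg[OF w(1)] in simp)
    also have "\<dots> = y1 - y0" using s by simp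
    finally have "(R x1, R y1) \<in> LT x0 y0 s w"
      using LT_right[where x=x1 and y=y1 and x0=x0 and y0=y0 and s=s and w=w] w unfolding d_def by simp
    then show ?thesis using w by blast
  next
    case 2
    obtain z where z: "0 < z" "z < - d" "f1 z + f2 (- d - z) = ((y0 - y1) / - s) * (- deriv f1 z)"
      using solve_xi[OF sh1(1) sh1(2), of "- d" "(y0 - y1) / - s"] 2 s by (auto simp del: divide_minus_right)
    have "s / deriv f1 z * (f2 (x0 - z - x1) + f1 z) = - (s * ((y0 - y1) / - s))"
      unfolding add.commute[of "f2 (x0 - z - x1)"]
      using z(3) qalg[of "deriv f1 z" s "(y0 - y1) / - s"] F1.deriv_neg[OF z(1)]
      by (simp add: d_def algebra_simps)
    also have "\<dots> = y0 - y1" using s by simp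
    finally have "(R x1, R y1) \<in> RT x0 y0 s z"
      using RT_left[where x=x1 and y=y1 and x0=x0 and y0=y0 and s=s and z=z] z unfolding d_def by simp
    then show ?thesis using z by blast
  next
    case 3
    note o3 = 3
    define k where "k = (y0 - y1) / - s"
    have k: "k > 0" using o3 s by (simp add: k_def divide_pos_neg)
    consider "k = d" | "k < d" | "k > d" by linarith
    then show ?thesis
    proof cases
      case 1
      then have "y1 = s * x1 + (y0 - s * x0)" using s by (simp add: k_def d_def field_simps)
      then show ?thesis by (simp add: ml_RR)
    next
      case 2
      obtain z where z: "z > 0" "f1 z - f1 (z + d) = k * (- deriv f1 z)"
        using F1.solve_phi[of d k] o3 k 2 by auto
      have "s / deriv f1 z * (f1 (x1 - x0 + z) - f1 z) = - (s / deriv f1 z * (f1 z - f1 (z + d)))"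
        by (simp add: d_def algebra_simps)
      also have "\<dots> = s * k" unfolding z(2) using qalg[of "deriv f1 z" s k] F1.deriv_neg[OF z(1)] by simp
      also have "\<dots> = y1 - y0" using s by (simp add: k_def)
      finally have "(R x1, R y1) \<in> RT x0 y0 s z"
        using RT_right[where x=x1 and y=y1 and x0=x0 and y0=y0 and s=s and z=z] z o3 unfolding d_def by simp
      then show ?thesis using z by blast
    next
      case 3
      obtain w where w: "w > d" "f2 (w - d) - f2 w = k * (- deriv f2 w)"
        using F2.solve_psi[of d k] o3 3 by auto
      have w0: "w > 0" using w o3 by simp
      have "s / deriv f2 w * (f2 w - f2 (x0 + w - x1)) = - (s / deriv f2 w * (f2 (w - d) - f2 w))"
        by (simp add: d_def algebra_simps)
      also have "\<dots> = s * k" unfolding w(2) using qalg[of "deriv f2 w" s k] F2.deriv_neg[OF w0] by simp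
      also have "\<dots> = y1 - y0" using s by (simp add: k_def)
      finally have "(R x1, R y1) \<in> LT x0 y0 s w"
        using LT_left[where x=x1 and y=y1 and x0=x0 and y0=y0 and s=s and w=w] w w0 unfolding d_def by simp
      then show ?thesis using w0 by blast
    qed
  next
    case 4
    define e where "e = - d"
    define m where "m = (y1 - y0) / - s"
    have e: "e > 0" using 4 by (simp add: e_def)
    have m: "m > 0" using 4 s by (simp add: m_def divide_pos_neg)
    consider "m = e" | "m > e" | "m < e" by linarith
    then show ?thesis
    proof cases
      case 1
      then have "y1 = s * x1 + (y0 - s * x0)" using s by (simp add: m_def e_def d_def field_simps)
      then show ?thesis by (simp add: ml_RR)
    next
      case 2
      obtain z where z: "z > e" "f1 (z - e) - f1 z = m * (- deriv f1 z)"
        using F1.solve_psi[of e m] e 2 by auto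
      have z0: "z > 0" using z e by simp
      have "s / deriv f1 z * (f1 (x1 - x0 + z) - f1 z) = s / deriv f1 z * (f1 (z - e) - f1 z)"
        by (simp add: e_def d_def algebra_simps)
      also have "\<dots> = - (s * m)" unfolding z(2) using qalg[of "deriv f1 z" s m] F1.deriv_neg[OF z0] by simp
      also have "\<dots> = y1 - y0" using s by (simp add: m_def)
      finally have "(R x1, R y1) \<in> RT x0 y0 s z"
        using RT_right[where x=x1 and y=y1 and x0=x0 and y0=y0 and s=s and z=z] z z0 unfolding e_def d_def by simp
      then show ?thesis using z0 by blast
    next
      case 3
      obtain w where w: "w > 0" "f2 w - f2 (w + e) = m * (- deriv f2 w)"
        using F2.solve_phi[of e m] e m 3 by auto
      have "s / deriv f2 w * (f2 w - f2 (x0 + w - x1)) = s / deriv f2 w * (f2 w - f2 (w + e))"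
        by (simp add: e_def d_def algebra_simps)
      also have "\<dots> = - (s * m)" unfolding w(2) using qalg[of "deriv f2 w" s m] F2.deriv_neg[OF w(1)] by simp
      also have "\<dots> = y1 - y0" using s by (simp add: m_def)
      finally have "(R x1, R y1) \<in> LT x0 y0 s w"
        using LT_left[where x=x1 and y=y1 and x0=x0 and y0=y0 and s=s and w=w] w 4 unfolding e_def d_def by simp
      then show ?thesis using w by blast
    qed
  qed
qed


lemma hgt: fixes D s A t :: real
  assumes "D < 0" "s < 0" "A > D * t" shows "s / D * A > s * t"
proof -
  have "s / D > 0" using assms by (simp add: divide_neg_neg)
  then have "s / D * A > s / D * (D * t)" using mult_strict_left_mono[OF assms(3)] by blast
  also have "s / D * (D * t) = s * t" using assms by simp
  finally show ?thesis .
qed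

lemma hlt: fixes D s A t :: real
  assumes "D < 0" "s < 0" "A < D * t" shows "s / D * A < s * t"
proof -
  have "s / D > 0" using assms by (simp add: divide_neg_neg)
  then have "s / D * A < s / D * (D * t)" using mult_strict_left_mono[OF assms(3)] by blast
  also have "s / D * (D * t) = s * t" using assms by simp
  finally show ?thesis .
qed

lemma apos: fixes D s :: real assumes "D < 0" "s < 0" shows "s / D > 0"
  using assms by (simp add: divide_neg_neg)

lemma RT_dom: "(R x, R y) \<in> RT x0 y0 s z \<Longrightarrow> x \<noteq> x0 - z"
  unfolding RT_def mf_RR by simp
lemma LT_dom: "(R x, R y) \<in> LT x0 y0 s w \<Longrightarrow> x \<noteq> x0 + w"
  unfolding LT_def mf_RR by simp

lemma line_RT: assumes s: "s < 0" and z: "z > 0"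
  shows "curve_l s (y0 - s * x0) \<inter> RT x0 y0 s z = {(R x0, R y0)}"
proof (rule int_single)
  show "(R x0, R y0) \<in> curve_l s (y0 - s * x0)" by (simp add: ml_RR)
  show "(R x0, R y0) \<in> RT x0 y0 s z" using RT_right[of z x0 x0] z by simp
  have D: "deriv f1 z < 0" using F1.deriv_neg z by simp
  fix x y assume L: "(R x, R y) \<in> curve_l s (y0 - s * x0)" and M: "(R x, R y) \<in> RT x0 y0 s z"
  have yl: "y = y0 + s * (x - x0)" using L by (simp add: ml_RR algebra_simps)
  consider "x > x0 - z" | "x < x0 - z" using RT_dom[OF M] by linarith
  then show "(R x, R y) = (R x0, R y0)"
  proof cases
    case 1
    then have y: "y = y0 + s / deriv f1 z * (f1 (x - x0 + z) - f1 z)" using RT_right[of z x0 x] z M by simp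
    show ?thesis
    proof (rule ccontr)
      assume "(R x, R y) \<noteq> (R x0, R y0)"
      then have "x \<noteq> x0" using y by auto
      then have "f1 (x - x0 + z) > f1 z + deriv f1 z * ((x - x0 + z) - z)"
        using F1.tangent_strict[of z "x - x0 + z"] z 1 by simp
      then have "f1 (x - x0 + z) - f1 z > deriv f1 z * (x - x0)" by simp
      then have "s / deriv f1 z * (f1 (x - x0 + z) - f1 z) > s * (x - x0)" by (rule hgt[OF D s])
      then show False using y yl by simp
    qed
  next
    case 2
    then have y: "y = y0 - s / deriv f1 z * (f2 (x0 - z - x) + f1 z)" using RT_left[of z x x0] z M by simp
    have "f2 (x0 - z - x) + f1 z > 0" using F2.pos F1.pos z 2 by (simp add: add_pos_pos)
    then have "s / deriv f1 z * (f2 (x0 - z - x) + f1 z) > 0" using mult_pos_pos[OF apos[OF D s]] by blast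
    moreover have "s * (x - x0) > 0" using s 2 z by (simp add: mult_neg_neg)
    ultimately show ?thesis using y yl by simp
  qed
next
  fix x assume "(R x, Infty) \<in> curve_l s (y0 - s * x0)" "(R x, Infty) \<in> RT x0 y0 s z"
  then show "(R x, Infty) = (R x0, R y0)" by (simp add: ml_RI)
next
  fix y assume "(Infty, R y) \<in> curve_l s (y0 - s * x0)" "(Infty, R y) \<in> RT x0 y0 s z"
  then show "(Infty, R y) = (R x0, R y0)" by (simp add: ml_IR)
next
  assume "(Infty, Infty) \<in> curve_l s (y0 - s * x0)" "(Infty, Infty) \<in> RT x0 y0 s z"
  then show "(Infty, Infty) = (R x0, R y0)" by (simp add: RT_def mf_II)
qed

lemma line_LT: assumes s: "s < 0" and w: "w > 0"
  shows "curve_l s (y0 - s * x0) \<inter> LT x0 y0 s w = {(R x0, R y0)}"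
proof (rule int_single)
  show "(R x0, R y0) \<in> curve_l s (y0 - s * x0)" by (simp add: ml_RR)
  show "(R x0, R y0) \<in> LT x0 y0 s w" using LT_left[of w x0 x0] w by simp
  have D: "deriv f2 w < 0" using F2.deriv_neg w by simp
  fix x y assume L: "(R x, R y) \<in> curve_l s (y0 - s * x0)" and M: "(R x, R y) \<in> LT x0 y0 s w"
  have yl: "y = y0 + s * (x - x0)" using L by (simp add: ml_RR algebra_simps)
  consider "x < x0 + w" | "x > x0 + w" using LT_dom[OF M] by linarith
  then show "(R x, R y) = (R x0, R y0)"
  proof cases
    case 1
    then have y: "y = y0 + s / deriv f2 w * (f2 w - f2 (x0 + w - x))" using LT_left[of w x x0] w M by simp
    show ?thesis
    proof (rule ccontr)
      assume "(R x, R y) \<noteq> (R x0, R y0)"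
      then have "x \<noteq> x0" using y by auto
      then have "f2 (x0 + w - x) > f2 w + deriv f2 w * ((x0 + w - x) - w)"
        using F2.tangent_strict[of w "x0 + w - x"] w 1 by simp
      then have "f2 w - f2 (x0 + w - x) < deriv f2 w * (x - x0)" by (simp add: algebra_simps)
      then have "s / deriv f2 w * (f2 w - f2 (x0 + w - x)) < s * (x - x0)" by (rule hlt[OF D s])
      then show False using y yl by simp
    qed
  next
    case 2
    then have y: "y = y0 + s / deriv f2 w * (f1 (x - x0 - w) + f2 w)" using LT_right[of w x0 x] w M by simp
    have "f1 (x - x0 - w) + f2 w > 0" using F2.pos F1.pos w 2 by (simp add: add_pos_pos)
    then have "s / deriv f2 w * (f1 (x - x0 - w) + f2 w) > 0" using mult_pos_pos[OF apos[OF D s]] by blast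
    moreover have "s * (x - x0) < 0" using s 2 w by (simp add: mult_neg_pos)
    ultimately show ?thesis using y yl by simp
  qed
next
  fix x assume "(R x, Infty) \<in> curve_l s (y0 - s * x0)" "(R x, Infty) \<in> LT x0 y0 s w"
  then show "(R x, Infty) = (R x0, R y0)" by (simp add: ml_RI)
next
  fix y assume "(Infty, R y) \<in> curve_l s (y0 - s * x0)" "(Infty, R y) \<in> LT x0 y0 s w"
  then show "(Infty, R y) = (R x0, R y0)" by (simp add: ml_IR)
next
  assume "(Infty, Infty) \<in> curve_l s (y0 - s * x0)" "(Infty, Infty) \<in> LT x0 y0 s w"
  then show "(Infty, Infty) = (R x0, R y0)" by (simp add: LT_def mf_II)
qed


lemma F_TL: assumes a: "a > 0" and x0: "x0 > - b" and y0: "y0 = a * f1 (x0 + b) + c"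
    and sd: "s = a * deriv f1 (x0 + b)"
  shows "curve_f f1 f2 a b c \<inter> curve_l s (y0 - s * x0) = {(R x0, R y0)}"
proof (rule int_single)
  show "(R x0, R y0) \<in> curve_f f1 f2 a b c" using x0 y0 by (simp add: mf_RR fabc_right)
  show "(R x0, R y0) \<in> curve_l s (y0 - s * x0)" by (simp add: ml_RR)
  fix x y assume C: "(R x, R y) \<in> curve_f f1 f2 a b c" and L: "(R x, R y) \<in> curve_l s (y0 - s * x0)"
  have yl: "y = y0 + s * (x - x0)" using L by (simp add: ml_RR algebra_simps)
  have xb: "x \<noteq> - b" and yc: "y = fabc f1 f2 a b c x" using C by (auto simp: mf_RR)
  consider "x > - b" | "x < - b" using xb by linarith
  then show "(R x, R y) = (R x0, R y0)"
  proof cases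
    case 1
    then have y: "y = a * f1 (x + b) + c" using yc by (simp add: fabc_right)
    show ?thesis
    proof (rule ccontr)
      assume "(R x, R y) \<noteq> (R x0, R y0)"
      then have "x \<noteq> x0" using y y0 by auto
      then have "f1 (x + b) > f1 (x0 + b) + deriv f1 (x0 + b) * ((x + b) - (x0 + b))"
        using F1.tangent_strict[of "x0 + b" "x + b"] x0 1 by simp
      then have "a * f1 (x + b) > a * (f1 (x0 + b) + deriv f1 (x0 + b) * (x - x0))"
        using a by simp
      then show False using y yl y0 sd by (simp add: algebra_simps)
    qed
  next
    case 2
    then have "y = - a * f2 (- x - b) + c" using yc by (simp add: fabc_left)
    moreover have "a * f2 (- x - b) > 0" using a F2.pos[of "- x - b"] 2 by simp
    moreover have "a * f1 (x0 + b) > 0" using a F1.pos[of "x0 + b"] x0 by simp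
    moreover have "s < 0" using sd a F1.deriv_neg[of "x0 + b"] x0 by (simp add: mult_pos_neg)
    then have "s * (x - x0) > 0" using 2 x0 by (simp add: mult_neg_neg)
    ultimately show ?thesis using yl y0 by simp
  qed
next
  fix x assume "(R x, Infty) \<in> curve_f f1 f2 a b c" "(R x, Infty) \<in> curve_l s (y0 - s * x0)"
  then show "(R x, Infty) = (R x0, R y0)" by (simp add: ml_RI)
next
  fix y assume "(Infty, R y) \<in> curve_f f1 f2 a b c" "(Infty, R y) \<in> curve_l s (y0 - s * x0)"
  then show "(Infty, R y) = (R x0, R y0)" by (simp add: ml_IR)
next
  assume "(Infty, Infty) \<in> curve_f f1 f2 a b c" "(Infty, Infty) \<in> curve_l s (y0 - s * x0)"
  then show "(Infty, Infty) = (R x0, R y0)" by (simp add: mf_II)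
qed

lemma F_LT: assumes a: "a > 0" and x0: "x0 > - b" and y0: "y0 = a * f1 (x0 + b) + c"
    and sd: "s = a * deriv f1 (x0 + b)" and w: "w > 0"
  shows "curve_f f1 f2 a b c \<inter> LT x0 y0 s w = {(R x0, R y0)}"
proof (rule int_single)
  have s: "s < 0" using sd a F1.deriv_neg[of "x0 + b"] x0 by (simp add: mult_pos_neg)
  have D: "deriv f2 w < 0" using F2.deriv_neg w by simp
  have ap: "s / deriv f2 w > 0" using apos[OF D s] .
  have cy: "c < y0" using y0 a F1.pos[of "x0 + b"] x0 by simp
  show "(R x0, R y0) \<in> curve_f f1 f2 a b c" using x0 y0 by (simp add: mf_RR fabc_right)
  show "(R x0, R y0) \<in> LT x0 y0 s w" using LT_left[of w x0 x0] w by simp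
  fix x y assume C: "(R x, R y) \<in> curve_f f1 f2 a b c" and M: "(R x, R y) \<in> LT x0 y0 s w"
  have xb: "x \<noteq> - b" and yc: "y = fabc f1 f2 a b c x" using C by (auto simp: mf_RR)
  consider "x > - b" "x < x0 + w" | "x > - b" "x > x0 + w" | "x < - b" using xb LT_dom[OF M] by linarith
  then show "(R x, R y) = (R x0, R y0)"
  proof cases
    case 1
    have y1: "y = a * f1 (x + b) + c" using yc 1 by (simp add: fabc_right)
    have y2: "y = y0 + s / deriv f2 w * (f2 w - f2 (x0 + w - x))" using LT_left[of w x x0] w M 1 by simp
    show ?thesis
    proof (rule ccontr)
      assume "(R x, R y) \<noteq> (R x0, R y0)"
      then have "x \<noteq> x0" using y1 y0 by auto
      then have "f1 (x + b) > f1 (x0 + b) + deriv f1 (x0 + b) * ((x + b) - (x0 + b))"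
        using F1.tangent_strict[of "x0 + b" "x + b"] x0 1 by simp
      then have "a * f1 (x + b) > a * (f1 (x0 + b) + deriv f1 (x0 + b) * (x - x0))"
        using a by simp
      then have g1: "y > y0 + s * (x - x0)" using y1 y0 sd by (simp add: algebra_simps)
      have "f2 (x0 + w - x) > f2 w + deriv f2 w * ((x0 + w - x) - w)"
        using F2.tangent_strict[of w "x0 + w - x"] w 1 \<open>x \<noteq> x0\<close> by simp
      then have "f2 w - f2 (x0 + w - x) < deriv f2 w * (x - x0)" by (simp add: algebra_simps)
      then have "s / deriv f2 w * (f2 w - f2 (x0 + w - x)) < s * (x - x0)" by (rule hlt[OF D s])
      then show False using y2 g1 by simp
    qed
  next
    case 2
    have y2: "y = y0 + s / deriv f2 w * (f1 (x - x0 - w) + f2 w)" using LT_right[of w x0 x] w M 2 by simp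
    have "f1 (x - x0 - w) + f2 w > 0" using F2.pos F1.pos w 2 by (simp add: add_pos_pos)
    then have "s / deriv f2 w * (f1 (x - x0 - w) + f2 w) > 0" using mult_pos_pos[OF ap] by blast
    moreover have "f1 (x + b) < f1 (x0 + b)" using F1.strict_dec[of "x0 + b" "x + b"] x0 2 w by simp
    then have "a * f1 (x + b) < a * f1 (x0 + b)" using a by simp
    moreover have "y = a * f1 (x + b) + c" using yc 2 by (simp add: fabc_right)
    ultimately show ?thesis using y2 y0 by simp
  next
    case 3
    have y1: "y = - a * f2 (- x - b) + c" using yc 3 by (simp add: fabc_left)
    have "a * f2 (- x - b) > 0" using a F2.pos[of "- x - b"] 3 by simp
    then have "y < c" using y1 by simp
    have xw: "x < x0 + w" using 3 x0 w by simp
    have y2: "y = y0 + s / deriv f2 w * (f2 w - f2 (x0 + w - x))" using LT_left[of w x x0] w M xw by simp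
    have "f2 (x0 + w - x) < f2 w" using F2.strict_dec[of w "x0 + w - x"] w 3 x0 by simp
    then have "s / deriv f2 w * (f2 w - f2 (x0 + w - x)) > 0" using mult_pos_pos[OF ap] by simp
    then show ?thesis using y2 cy \<open>y < c\<close> by simp
  qed
next
  have cy: "c < y0" using y0 a F1.pos[of "x0 + b"] x0 by simp
  fix x assume "(R x, Infty) \<in> curve_f f1 f2 a b c" "(R x, Infty) \<in> LT x0 y0 s w"
  then have "x = - b" "x = x0 + w" by (auto simp: mf_RI LT_def)
  then show "(R x, Infty) = (R x0, R y0)" using x0 w by simp
next
  have s: "s < 0" using sd a F1.deriv_neg[of "x0 + b"] x0 by (simp add: mult_pos_neg)
  have D: "deriv f2 w < 0" using F2.deriv_neg w by simp
  have cy: "c < y0" using y0 a F1.pos[of "x0 + b"] x0 by simp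
  fix y assume "(Infty, R y) \<in> curve_f f1 f2 a b c" "(Infty, R y) \<in> LT x0 y0 s w"
  then have "y = c" "y = y0 + s / deriv f2 w * f2 w" by (auto simp: mf_IR LT_def)
  moreover have "s / deriv f2 w * f2 w > 0" using mult_pos_pos[OF apos[OF D s] F2.pos[OF w]] .
  ultimately show "(Infty, R y) = (R x0, R y0)" using cy by simp
next
  assume "(Infty, Infty) \<in> curve_f f1 f2 a b c" "(Infty, Infty) \<in> LT x0 y0 s w"
  then show "(Infty, Infty) = (R x0, R y0)" by (simp add: mf_II)
qed


lemma FF:
  assumes a: "a > 0" and a': "a' > 0" and bb: "b < b'" and x0: "x0 > - b"
    and y0: "a * f1 (x0 + b) + c = y0" and y0': "a' * f1 (x0 + b') + c' = y0"
    and tg: "a' * deriv f1 (x0 + b') = a * deriv f1 (x0 + b)"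
  shows "curve_f f1 f2 a b c \<inter> curve_f f1 f2 a' b' c' = {(R x0, R y0)}"
proof -
  define g where "g x = a' * f1 (x + b') + c' - a * f1 (x + b) - c" for x
  define g' where "g' x = a' * deriv f1 (x + b') - a * deriv f1 (x + b)" for x
  have gder: "(g has_real_derivative g' x) (at x)" if "x > - b" for x
  proof -
    have h1: "((\<lambda>x. f1 (x + b')) has_real_derivative deriv f1 (x + b')) (at x)"
      using F1.der[of "x + b'"] that bb DERIV_shift by force
    have h2: "((\<lambda>x. f1 (x + b)) has_real_derivative deriv f1 (x + b)) (at x)"
      using F1.der[of "x + b"] that DERIV_shift by force
    note h = DERIV_diff[OF DERIV_diff[OF DERIV_add[OF DERIV_cmult[OF h1, of a'] DERIV_const[of c']]
         DERIV_cmult[OF h2, of a]] DERIV_const[of c]]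
    then show ?thesis unfolding g_def g'_def by simp
  qed
  have g0: "g x0 = 0" using y0 y0' by (simp add: g_def)
  have Dn: "deriv f1 (x0 + b') < 0" using F1.deriv_neg x0 bb by simp
  have after: "g' x < 0" if "x > x0" for x
  proof -
    have "deriv f1 (x0 + b) * deriv f1 (x + b + (b' - b)) > deriv f1 (x0 + b + (b' - b)) * deriv f1 (x + b)"
      using F1.logchord[of "x0 + b" "x + b" "b' - b"] x0 that bb by simp
    then have L: "deriv f1 (x0 + b) * deriv f1 (x + b') > deriv f1 (x0 + b') * deriv f1 (x + b)" by simp
    have "g' x * deriv f1 (x0 + b') = (a' * deriv f1 (x0 + b')) * deriv f1 (x + b') - a * deriv f1 (x + b) * deriv f1 (x0 + b')"
      by (simp add: g'_def algebra_simps)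
    also have "\<dots> = a * (deriv f1 (x0 + b) * deriv f1 (x + b') - deriv f1 (x0 + b') * deriv f1 (x + b))"
      unfolding tg by (simp add: algebra_simps)
    also have "\<dots> > 0" using L a by simp
    finally show ?thesis using Dn by (simp add: zero_less_mult_iff)
  qed
  have before: "g' x > 0" if "x > - b" "x < x0" for x
  proof -
    have "deriv f1 (x + b) * deriv f1 (x0 + b + (b' - b)) > deriv f1 (x + b + (b' - b)) * deriv f1 (x0 + b)"
      using F1.logchord[of "x + b" "x0 + b" "b' - b"] x0 that bb by simp
    then have L: "deriv f1 (x + b) * deriv f1 (x0 + b') > deriv f1 (x + b') * deriv f1 (x0 + b)" by simp
    have "g' x * deriv f1 (x0 + b') = (a' * deriv f1 (x0 + b')) * deriv f1 (x + b') - a * deriv f1 (x + b) * deriv f1 (x0 + b')"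
      by (simp add: g'_def algebra_simps)
    also have "\<dots> = a * (deriv f1 (x0 + b) * deriv f1 (x + b') - deriv f1 (x0 + b') * deriv f1 (x + b))"
      unfolding tg by (simp add: algebra_simps)
    also have "\<dots> < 0" using L a by (simp add: mult_pos_neg algebra_simps)
    finally show ?thesis using Dn by (simp add: mult_less_0_iff)
  qed
  have gneg: "g x < 0" if hx: "x > - b" "x \<noteq> x0" for x
  proof (cases "x > x0")
    case True
    obtain t where t: "x0 < t" "t < x" "g x - g x0 = (x - x0) * g' t"
      using MVT2[of x0 x g g'] True gder x0 by force
    have "g' t < 0" using after t by simp
    then have "(x - x0) * g' t < 0" using True by (simp add: mult_pos_neg)
    then show ?thesis using t g0 by simp
  next
    case False
    then have xl: "x < x0" using that by simp
    obtain t where t: "x < t" "t < x0" "g x0 - g x = (x0 - x) * g' t"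
      using MVT2[of x x0 g g'] xl gder hx by force
    have "g' t > 0" using before t hx by simp
    then have "(x0 - x) * g' t > 0" using xl by simp
    then show ?thesis using t g0 by simp
  qed
  have cc: "c' < c"
  proof -
    have lim: "(g \<longlongrightarrow> a' * 0 + c' - a * 0 - c) at_top"
      unfolding g_def
      by (intro tendsto_diff tendsto_add tendsto_mult tendsto_const F1.shift_tendsto0)
    have ev: "eventually (\<lambda>x. g x \<le> g (x0 + 1)) at_top"
      unfolding eventually_at_top_linorder
    proof (intro exI[of _ "x0 + 2"] allI impI)
      fix x assume x: "x \<ge> x0 + 2"
      obtain t where t: "x0 + 1 < t" "t < x" "g x - g (x0 + 1) = (x - (x0 + 1)) * g' t"
        using MVT2[of "x0 + 1" x g g'] x gder x0 by force
      have "g' t < 0" using after t by simp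
      then have "(x - (x0 + 1)) * g' t \<le> 0" using x by (simp add: mult_nonneg_nonpos)
      then show "g x \<le> g (x0 + 1)" using t by simp
    qed
    have "c' - c \<le> g (x0 + 1)" using tendsto_upperbound[OF lim ev] by simp
    also have "g (x0 + 1) < 0" using gneg x0 by simp
    finally show ?thesis by simp
  qed
  have aa: "a' > a"
  proof -
    have "deriv f1 (x0 + b) < deriv f1 (x0 + b')" using F1.deriv_mono x0 bb by simp
    then have "a * deriv f1 (x0 + b) < a * deriv f1 (x0 + b')" using a by simp
    then have "a' * deriv f1 (x0 + b') < a * deriv f1 (x0 + b')" using tg by simp
    then show ?thesis using Dn by simp
  qed
  show ?thesis
  proof (rule int_single)
    show "(R x0, R y0) \<in> curve_f f1 f2 a b c" using x0 y0 by (simp add: mf_RR fabc_right)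
    show "(R x0, R y0) \<in> curve_f f1 f2 a' b' c'" using x0 y0' bb by (simp add: mf_RR fabc_right)
    fix x y assume C: "(R x, R y) \<in> curve_f f1 f2 a b c" and D: "(R x, R y) \<in> curve_f f1 f2 a' b' c'"
    have xb: "x \<noteq> - b" and yc: "y = fabc f1 f2 a b c x" using C by (auto simp: mf_RR)
    have xb': "x \<noteq> - b'" and yd: "y = fabc f1 f2 a' b' c' x" using D by (auto simp: mf_RR)
    consider "x > - b" | "x < - b" "x > - b'" | "x < - b'" using xb xb' bb by linarith
    then show "(R x, R y) = (R x0, R y0)"
    proof cases
      case 1
      have "y = a * f1 (x + b) + c" using yc 1 by (simp add: fabc_right)
      moreover have "y = a' * f1 (x + b') + c'" using yd 1 bb by (simp add: fabc_right)
      ultimately have "g x = 0" by (simp add: g_def)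
      then have "x = x0" using gneg 1 by force
      then show ?thesis using yc y0 by (simp add: fabc_right x0)
    next
      case 2
      have "y = a' * f1 (x + b') + c'" using yd 2 by (simp add: fabc_right)
      moreover have "f1 (x + b') > f1 (x0 + b')" using F1.strict_dec[of "x + b'" "x0 + b'"] 2 x0 by simp
      then have "a' * f1 (x + b') > a' * f1 (x0 + b')" using a' by simp
      moreover have "y = - a * f2 (- x - b) + c" using yc 2 by (simp add: fabc_left)
      moreover have "a * f2 (- x - b) > 0" using a F2.pos[of "- x - b"] 2 by simp
      moreover have "a * f1 (x0 + b) > 0" using a F1.pos[of "x0 + b"] x0 by simp
      ultimately show ?thesis using y0 y0' by simp
    next
      case 3
      have yl: "y = - a * f2 (- x - b) + c" using yc 3 bb by (simp add: fabc_left)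
      have yl': "y = - a' * f2 (- x - b') + c'" using yd 3 by (simp add: fabc_left)
      have "0 < - x - b'" "- x - b' < - x - b" using 3 bb by auto
      then have "f2 (- x - b') > f2 (- x - b)" by (rule F2.strict_dec)
      moreover have "f2 (- x - b) > 0" using F2.pos 3 bb by simp
      ultimately have "a' * f2 (- x - b') > a * f2 (- x - b)" using aa a
        by (meson less_trans mult_strict_left_mono mult_strict_right_mono a')
      then show ?thesis using yl yl' cc by simp
    qed
  next
    fix x assume "(R x, Infty) \<in> curve_f f1 f2 a b c" "(R x, Infty) \<in> curve_f f1 f2 a' b' c'"
    then show "(R x, Infty) = (R x0, R y0)" using bb by (simp add: mf_RI)
  next
    fix y assume "(Infty, R y) \<in> curve_f f1 f2 a b c" "(Infty, R y) \<in> curve_f f1 f2 a' b' c'"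
    then show "(Infty, R y) = (R x0, R y0)" using cc by (simp add: mf_IR)
  next
    assume "(Infty, Infty) \<in> curve_f f1 f2 a b c" "(Infty, Infty) \<in> curve_f f1 f2 a' b' c'"
    then show "(Infty, Infty) = (R x0, R y0)" by (simp add: mf_II)
  qed
qed


lemma F_RT: assumes a: "a > 0" and x0: "x0 > - b" and y0: "y0 = a * f1 (x0 + b) + c"
    and sd: "s = a * deriv f1 (x0 + b)" and z: "z > 0" and zb: "z \<noteq> x0 + b"
  shows "curve_f f1 f2 a b c \<inter> RT x0 y0 s z = {(R x0, R y0)}"
proof -
  have s: "s < 0" using sd a F1.deriv_neg[of "x0 + b"] x0 by (simp add: mult_pos_neg)
  have D: "deriv f1 z < 0" using F1.deriv_neg z by simp
  define a' where "a' = s / deriv f1 z"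
  define c' where "c' = y0 - a' * f1 z"
  have a': "a' > 0" using apos[OF D s] by (simp add: a'_def)
  have RTe: "RT x0 y0 s z = curve_f f1 f2 a' (z - x0) c'" by (simp add: RT_def a'_def c'_def)
  have e1: "a' * f1 (x0 + (z - x0)) + c' = y0" by (simp add: c'_def)
  have e2: "a' * deriv f1 (x0 + (z - x0)) = a * deriv f1 (x0 + b)" using D sd by (simp add: a'_def)
  have y0': "a * f1 (x0 + b) + c = y0" using y0 by simp
  consider "b < z - x0" | "z - x0 < b" using zb by linarith
  then show ?thesis
  proof cases
    case 1
    show ?thesis unfolding RTe by (rule FF[OF a a' 1 x0 y0' e1 e2])
  next
    case 2
    have "curve_f f1 f2 a' (z - x0) c' \<inter> curve_f f1 f2 a b c = {(R x0, R y0)}"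
      by (rule FF[OF a' a 2 _ e1 y0' e2[symmetric]]) (use z in simp)
    then show ?thesis unfolding RTe by (simp add: Int_commute)
  qed
qed

lemma RT_self: assumes a: "a > 0" and x0: "x0 > - b" and y0: "y0 = a * f1 (x0 + b) + c"
    and sd: "s = a * deriv f1 (x0 + b)"
  shows "RT x0 y0 s (x0 + b) = curve_f f1 f2 a b c"
proof -
  have D: "deriv f1 (x0 + b) \<noteq> 0" using F1.deriv_neg[of "x0 + b"] x0 by simp
  then show ?thesis unfolding RT_def sd y0 by simp
qed

lemma cover: assumes s: "s < 0" and q: "\<not> parallel q (R x0, R y0)"
  shows "q \<in> curve_l s (y0 - s * x0) \<or> (\<exists>z>0. q \<in> RT x0 y0 s z) \<or> (\<exists>w>0. q \<in> LT x0 y0 s w)"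
proof -
  obtain u v where uv: "q = (u, v)" by (cases q)
  show ?thesis
  proof (cases u)
    case Infty
    show ?thesis
    proof (cases v)
      case Infty
      then show ?thesis using uv \<open>u = Infty\<close> by (simp add: ml_II)
    next
      case (R y1)
      then have "y1 \<noteq> y0" using q uv by (auto simp: parallel_def)
      then show ?thesis using cover_IR[OF s, of y1 y0 x0] uv R \<open>u = Infty\<close> by auto
    qed
  next
    case (R x1)
    then have x1: "x1 \<noteq> x0" using q uv by (auto simp: parallel_def)
    show ?thesis
    proof (cases v)
      case Infty
      then show ?thesis using cover_RI[OF s x1, of y0] uv R by auto
    next
      case (R y1)
      then have "y1 \<noteq> y0" using q uv by (auto simp: parallel_def)
      then show ?thesis using cover_RR[OF s x1 \<open>y1 \<noteq> y0\<close>] uv R \<open>u = R x1\<close> by auto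
    qed
  qed
qed

lemma B3:
  assumes a: "a > 0" and x0: "x0 > - b" and y0: "y0 = fabc f1 f2 a b c x0"
    and q: "q \<notin> curve_f f1 f2 a b c" and np: "\<not> parallel q (R x0, R y0)"
  shows "\<exists>D\<in>Cminus f1 f2. (R x0, R y0) \<in> D \<and> q \<in> D \<and> curve_f f1 f2 a b c \<inter> D = {(R x0, R y0)}"
proof -
  define s where "s = a * deriv f1 (x0 + b)"
  have s: "s < 0" using a F1.deriv_neg[of "x0 + b"] x0 by (simp add: s_def mult_pos_neg)
  have y0': "y0 = a * f1 (x0 + b) + c" using y0 x0 by (simp add: fabc_right)
  have cv: "q \<in> curve_l s (y0 - s * x0) \<or> (\<exists>z>0. q \<in> RT x0 y0 s z) \<or> (\<exists>w>0. q \<in> LT x0 y0 s w)"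
    by (rule cover[OF s np])
  show ?thesis using cv
  proof (elim disjE exE conjE)
    assume 1: "q \<in> curve_l s (y0 - s * x0)"
    have "curve_f f1 f2 a b c \<inter> curve_l s (y0 - s * x0) = {(R x0, R y0)}"
      by (rule F_TL[OF a x0 y0' s_def])
    then show ?thesis by (rule witness[OF cl_in[OF s] 1])
  next
    fix z assume 2: "z > 0" "q \<in> RT x0 y0 s z"
    have "z \<noteq> x0 + b"
    proof
      assume "z = x0 + b"
      then have "q \<in> RT x0 y0 s (x0 + b)" using 2(2) by simp
      then show False using RT_self[OF a x0 y0' s_def] q by simp
    qed
    then have "curve_f f1 f2 a b c \<inter> RT x0 y0 s z = {(R x0, R y0)}"
      by (rule F_RT[OF a x0 y0' s_def 2(1)])
    then show ?thesis by (rule witness[OF RT_in[OF s 2(1)] 2(2)])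
  next
    fix w assume 3: "w > 0" "q \<in> LT x0 y0 s w"
    have "curve_f f1 f2 a b c \<inter> LT x0 y0 s w = {(R x0, R y0)}"
      by (rule F_LT[OF a x0 y0' s_def 3(1)])
    then show ?thesis by (rule witness[OF LT_in[OF s 3(1)] 3(2)])
  qed
qed

lemma A2:
  assumes s: "s < 0" and y0: "y0 = s * x0 + t"
    and q: "q \<notin> curve_l s t" and np: "\<not> parallel q (R x0, R y0)"
  shows "\<exists>D\<in>Cminus f1 f2. (R x0, R y0) \<in> D \<and> q \<in> D \<and> curve_l s t \<inter> D = {(R x0, R y0)}"
proof -
  have t: "t = y0 - s * x0" using y0 by simp
  have cv: "q \<in> curve_l s (y0 - s * x0) \<or> (\<exists>z>0. q \<in> RT x0 y0 s z) \<or> (\<exists>w>0. q \<in> LT x0 y0 s w)"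
    by (rule cover[OF s np])
  show ?thesis using cv
  proof (elim disjE exE conjE)
    assume 1: "q \<in> curve_l s (y0 - s * x0)"
    have "curve_l s t = curve_l s (y0 - s * x0)" using t by simp
    then show ?thesis using q 1 by blast
  next
    fix z assume 2: "z > 0" "q \<in> RT x0 y0 s z"
    have "curve_l s t \<inter> RT x0 y0 s z = {(R x0, R y0)}" unfolding t by (rule line_RT[OF s 2(1)])
    then show ?thesis by (rule witness[OF RT_in[OF s 2(1)] 2(2)])
  next
    fix w assume 3: "w > 0" "q \<in> LT x0 y0 s w"
    have "curve_l s t \<inter> LT x0 y0 s w = {(R x0, R y0)}" unfolding t by (rule line_LT[OF s 3(1)])
    then show ?thesis by (rule witness[OF LT_in[OF s 3(1)] 3(2)])
  qed
qed

end


context shf begin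
lemma onto: assumes "k > 0" shows "\<exists>t>0. f t = k"
proof -
  obtain v0 where v0: "v0 > 0" "\<forall>v. 0 < v \<and> v < v0 \<longrightarrow> f v > k" using small by blast
  define u where "u = v0 / 2"
  have u: "u > 0" "f u \<ge> k" using v0 by (auto simp: u_def less_imp_le)
  have "eventually (\<lambda>x. f x < k) at_top" using liminf assms by (simp add: order_tendstoD(2))
  then obtain N where N: "\<forall>x\<ge>N. f x < k" by (auto simp: eventually_at_top_linorder)
  define v where "v = max N 1"
  have v: "v > 0" "f v \<le> k" using N by (auto simp: v_def less_imp_le)
  have c: "isCont f x" if "0 < x" for x using cont that by simp
  have "\<exists>x. 0 < x \<and> x < max u v + 1 \<and> f x = k"
    by (rule ivt_int[of 0 "max u v + 1" f v u k]) (use c u v in auto)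
  then show ?thesis by blast
qed
end

lemma fabc_vshift: "fabc f1 f2 a b c' x = fabc f1 f2 a b c x + (c' - c)"
  unfolding fabc_def by simp

lemma fabc_shift: "fabc f1 f2 a b' c x = fabc f1 f2 a b c (x + b' - b)"
proof (cases "x > - b'")
  case True
  then have "x + b' - b > - b" by simp
  then show ?thesis using True by (simp add: fabc_def algebra_simps)
next
  case False
  then have "\<not> x + b' - b > - b" by simp
  then show ?thesis using False
    apply (simp add: fabc_def algebra_simps)
    by (rule disjI2, rule arg_cong[of _ _ f2], simp)
qed

context SH begin

lemma fabc_inj: assumes a: "a > 0" and x: "x \<noteq> - b" "x' \<noteq> - b"
    and e: "fabc f1 f2 a b c x = fabc f1 f2 a b c x'"
  shows "x = x'"
proof (rule ccontr)
  assume ne: "x \<noteq> x'"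
  have side: "fabc f1 f2 a b c z > c \<longleftrightarrow> z > - b" if "z \<noteq> - b" for z
  proof (cases "z > - b")
    case True then show ?thesis using F1.pos[of "z + b"] a by (simp add: fabc_right)
  next
    case False then have "z < - b" using that by simp
    moreover have "a * f2 (- z - b) > 0" using F2.pos[of "- z - b"] a \<open>z < - b\<close> by simp
    ultimately show ?thesis by (simp add: fabc_left)
  qed
  have same: "x > - b \<longleftrightarrow> x' > - b" using side[OF x(1)] side[OF x(2)] e by simp
  show False
  proof (cases "x > - b")
    case True
    then have "x' > - b" using same by simp
    then have "a * f1 (x + b) = a * f1 (x' + b)" using e True by (simp add: fabc_right)
    then have eq: "f1 (x + b) = f1 (x' + b)" using a by simp
    consider "x < x'" | "x' < x" using ne by linarith
    then show False
    proof cases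
      case 1 then show False using F1.strict_dec[of "x + b" "x' + b"] True eq by simp
    next
      case 2 then show False using F1.strict_dec[of "x' + b" "x + b"] \<open>x' > - b\<close> eq by simp
    qed
  next
    case False
    then have l: "x < - b" "x' < - b" using same x by auto
    then have "- a * f2 (- x - b) = - a * f2 (- x' - b)" using e by (simp add: fabc_left)
    then have eq: "f2 (- x - b) = f2 (- x' - b)" using a by simp
    consider "x < x'" | "x' < x" using ne by linarith
    then show False
    proof cases
      case 1 then show False using F2.strict_dec[of "- x' - b" "- x - b"] l eq by simp
    next
      case 2 then show False using F2.strict_dec[of "- x - b" "- x' - b"] l eq by simp
    qed
  qed
qed

lemma fabc_surj: assumes a: "a > 0" and y: "y \<noteq> c"
  shows "\<exists>x. x \<noteq> - b \<and> fabc f1 f2 a b c x = y"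
proof (cases "y > c")
  case True
  obtain t where t: "t > 0" "f1 t = (y - c) / a" using F1.onto[of "(y - c) / a"] True a by auto
  show ?thesis using t a by (intro exI[of _ "t - b"]) (simp add: fabc_right)
next
  case False
  then have "y < c" using y by simp
  obtain t where t: "t > 0" "f2 t = (c - y) / a" using F2.onto[of "(c - y) / a"] \<open>y < c\<close> a by auto
  show ?thesis using t a by (intro exI[of _ "- t - b"]) (simp add: fabc_left)
qed

lemma B1: assumes a: "a > 0" and q: "q \<notin> curve_f f1 f2 a b c" and np: "\<not> parallel q (R (- b), Infty)"
  shows "\<exists>D\<in>Cminus f1 f2. (R (- b), Infty) \<in> D \<and> q \<in> D \<and> curve_f f1 f2 a b c \<inter> D = {(R (- b), Infty)}"
proof -
  have key: "\<exists>D\<in>Cminus f1 f2. (R (- b), Infty) \<in> D \<and> q \<in> D \<and> curve_f f1 f2 a b c \<inter> D = {(R (- b), Infty)}"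
    if c': "c' \<noteq> c" and qD: "q \<in> curve_f f1 f2 a b c'" for c'
  proof (rule witness[OF cf_in[OF a] qD])
    show "curve_f f1 f2 a b c \<inter> curve_f f1 f2 a b c' = {(R (- b), Infty)}"
    proof (rule int_single)
      show "(R (- b), Infty) \<in> curve_f f1 f2 a b c" "(R (- b), Infty) \<in> curve_f f1 f2 a b c'"
        by (simp_all add: mf_RI)
      fix x y assume "(R x, R y) \<in> curve_f f1 f2 a b c" "(R x, R y) \<in> curve_f f1 f2 a b c'"
      then have "fabc f1 f2 a b c x = fabc f1 f2 a b c' x" by (simp add: mf_RR)
      then show "(R x, R y) = (R (- b), Infty)" using c' fabc_vshift[of f1 f2 a b c' x c] by simp
    next
      fix x assume "(R x, Infty) \<in> curve_f f1 f2 a b c" "(R x, Infty) \<in> curve_f f1 f2 a b c'"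
      then show "(R x, Infty) = (R (- b), Infty)" by (simp add: mf_RI)
    next
      fix y assume "(Infty, R y) \<in> curve_f f1 f2 a b c" "(Infty, R y) \<in> curve_f f1 f2 a b c'"
      then show "(Infty, R y) = (R (- b), Infty)" using c' by (simp add: mf_IR)
    next
      assume "(Infty, Infty) \<in> curve_f f1 f2 a b c" "(Infty, Infty) \<in> curve_f f1 f2 a b c'"
      then show "(Infty, Infty) = (R (- b), Infty)" by (simp add: mf_II)
    qed
  qed
  obtain u v where uv: "q = (u, v)" by (cases q)
  have "v \<noteq> Infty" using np uv by (auto simp: parallel_def)
  then obtain y1 where v: "v = R y1" by (cases v) auto
  show ?thesis
  proof (cases u)
    case Infty
    then have "y1 \<noteq> c" using q uv v by (auto simp: mf_IR)
    moreover have "q \<in> curve_f f1 f2 a b y1" using uv v Infty by (simp add: mf_IR)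
    ultimately show ?thesis using key by blast
  next
    case (R x1)
    then have x1: "x1 \<noteq> - b" using np uv by (auto simp: parallel_def)
    define c' where "c' = c + (y1 - fabc f1 f2 a b c x1)"
    have "y1 \<noteq> fabc f1 f2 a b c x1" using q uv v R x1 by (auto simp: mf_RR)
    then have "c' \<noteq> c" by (simp add: c'_def)
    moreover have "q \<in> curve_f f1 f2 a b c'" using uv v R x1 fabc_vshift[of f1 f2 a b c' x1 c]
      by (simp add: mf_RR c'_def)
    ultimately show ?thesis using key by blast
  qed
qed

lemma B2: assumes a: "a > 0" and q: "q \<notin> curve_f f1 f2 a b c" and np: "\<not> parallel q (Infty, R c)"
  shows "\<exists>D\<in>Cminus f1 f2. (Infty, R c) \<in> D \<and> q \<in> D \<and> curve_f f1 f2 a b c \<inter> D = {(Infty, R c)}"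
proof -
  have key: "\<exists>D\<in>Cminus f1 f2. (Infty, R c) \<in> D \<and> q \<in> D \<and> curve_f f1 f2 a b c \<inter> D = {(Infty, R c)}"
    if b': "b' \<noteq> b" and qD: "q \<in> curve_f f1 f2 a b' c" for b'
  proof (rule witness[OF cf_in[OF a] qD])
    show "curve_f f1 f2 a b c \<inter> curve_f f1 f2 a b' c = {(Infty, R c)}"
    proof (rule int_single)
      show "(Infty, R c) \<in> curve_f f1 f2 a b c" "(Infty, R c) \<in> curve_f f1 f2 a b' c"
        by (simp_all add: mf_IR)
      fix x y assume "(R x, R y) \<in> curve_f f1 f2 a b c" "(R x, R y) \<in> curve_f f1 f2 a b' c"
      then have h: "x \<noteq> - b" "x \<noteq> - b'" "fabc f1 f2 a b c x = fabc f1 f2 a b' c x" by (auto simp: mf_RR)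
      then have "fabc f1 f2 a b c x = fabc f1 f2 a b c (x + b' - b)" using fabc_shift[of f1 f2 a b' c x b] by simp
      moreover have "x + b' - b \<noteq> - b" using h by simp
      ultimately have "x = x + b' - b" using fabc_inj[OF a h(1)] by blast
      then show "(R x, R y) = (Infty, R c)" using b' by simp
    next
      fix x assume "(R x, Infty) \<in> curve_f f1 f2 a b c" "(R x, Infty) \<in> curve_f f1 f2 a b' c"
      then show "(R x, Infty) = (Infty, R c)" using b' by (simp add: mf_RI)
    next
      fix y assume "(Infty, R y) \<in> curve_f f1 f2 a b c" "(Infty, R y) \<in> curve_f f1 f2 a b' c"
      then show "(Infty, R y) = (Infty, R c)" by (simp add: mf_IR)
    next
      assume "(Infty, Infty) \<in> curve_f f1 f2 a b c" "(Infty, Infty) \<in> curve_f f1 f2 a b' c"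
      then show "(Infty, Infty) = (Infty, R c)" by (simp add: mf_II)
    qed
  qed
  obtain u v where uv: "q = (u, v)" by (cases q)
  have "u \<noteq> Infty" using np uv by (auto simp: parallel_def)
  then obtain x1 where u: "u = R x1" by (cases u) auto
  show ?thesis
  proof (cases v)
    case Infty
    then have "x1 \<noteq> - b" using q uv u by (auto simp: mf_RI)
    moreover have "q \<in> curve_f f1 f2 a (- x1) c" using uv u Infty by (simp add: mf_RI)
    ultimately show ?thesis using key[of "- x1"] by auto
  next
    case (R y1)
    then have "y1 \<noteq> c" using np uv by (auto simp: parallel_def)
    then obtain x' where x': "x' \<noteq> - b" "fabc f1 f2 a b c x' = y1" using fabc_surj[OF a] by blast
    define b' where "b' = b + x' - x1"
    have e: "x1 + b' - b = x'" by (simp add: b'_def)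
    have qD: "q \<in> curve_f f1 f2 a b' c"
      using uv u R x' e fabc_shift[of f1 f2 a b' c x1 b] by (auto simp: mf_RR b'_def)
    have "b' \<noteq> b"
    proof
      assume "b' = b"
      then have "x' = x1" using e by simp
      then show False using q uv u R x' by (simp add: mf_RR)
    qed
    then show ?thesis using key qD by blast
  qed
qed

end

lemma A1: assumes s: "s < 0" and q: "q \<notin> curve_l s t" and np: "\<not> parallel q (Infty, Infty)"
  shows "\<exists>D\<in>Cminus f1 f2. (Infty, Infty) \<in> D \<and> q \<in> D \<and> curve_l s t \<inter> D = {(Infty, Infty)}"
proof -
  obtain u v where uv: "q = (u, v)" by (cases q)
  have "u \<noteq> Infty" "v \<noteq> Infty" using np uv by (auto simp: parallel_def)
  then obtain x1 y1 where u: "u = R x1" and v: "v = R y1" by (cases u; cases v) auto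
  have ne: "y1 - s * x1 \<noteq> t" using q uv u v by (auto simp: ml_RR)
  have qD: "q \<in> curve_l s (y1 - s * x1)" using uv u v by (simp add: ml_RR)
  show ?thesis
  proof (rule witness[OF cl_in[OF s] qD])
    show "curve_l s t \<inter> curve_l s (y1 - s * x1) = {(Infty, Infty)}"
    proof (rule int_single)
      show "(Infty, Infty) \<in> curve_l s t" "(Infty, Infty) \<in> curve_l s (y1 - s * x1)"
        by (simp_all add: ml_II)
      fix x y assume "(R x, R y) \<in> curve_l s t" "(R x, R y) \<in> curve_l s (y1 - s * x1)"
      then show "(R x, R y) = (Infty, Infty)" using ne by (simp add: ml_RR)
    next
      fix x assume "(R x, Infty) \<in> curve_l s t" "(R x, Infty) \<in> curve_l s (y1 - s * x1)"
      then show "(R x, Infty) = (Infty, Infty)" by (simp add: ml_RI)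
    next
      fix y assume "(Infty, R y) \<in> curve_l s t" "(Infty, R y) \<in> curve_l s (y1 - s * x1)"
      then show "(Infty, R y) = (Infty, Infty)" by (simp add: ml_IR)
    next
      show "(Infty, Infty) = (Infty, Infty)" by simp
    qed
  qed
qed



definition rc :: "circ \<Rightarrow> circ" where
  "rc u = (case u of R x \<Rightarrow> R (- x) | Infty \<Rightarrow> Infty)"
definition rp :: "point \<Rightarrow> point" where
  "rp pt = (rc (fst pt), rc (snd pt))"

lemma rc_simps[simp]: "rc (R x) = R (- x)" "rc Infty = Infty"
  by (simp_all add: rc_def)
lemma rc_rc[simp]: "rc (rc u) = u" by (cases u) auto
lemma rp_rp[simp]: "rp (rp pt) = pt" by (simp add: rp_def)
lemma rp_simp[simp]: "rp (u, v) = (rc u, rc v)" by (simp add: rp_def)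
lemma rp_inj: "inj rp" by (metis injI rp_rp)
lemma rc_eq[simp]: "rc u = rc v \<longleftrightarrow> u = v" by (metis rc_rc)

lemma rp_image: "pt \<in> rp ` A \<longleftrightarrow> rp pt \<in> A"
  by (metis image_iff rp_rp)

lemma fabc_refl: "x \<noteq> b \<Longrightarrow> fabc f2 f1 a (- b) (- c) x = - fabc f1 f2 a b c (- x)"
  unfolding fabc_def by auto

lemma rp_cf: "rp ` curve_f f1 f2 a b c = curve_f f2 f1 a (- b) (- c)"
proof (rule set_eqI)
  fix pt :: point
  obtain u v where uv: "pt = (u, v)" by (cases pt)
  show "pt \<in> rp ` curve_f f1 f2 a b c \<longleftrightarrow> pt \<in> curve_f f2 f1 a (- b) (- c)"
    unfolding rp_image uv
  proof (cases u; cases v)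
    fix x y assume "u = R x" "v = R y"
    then show "rp (u, v) \<in> curve_f f1 f2 a b c \<longleftrightarrow> (u, v) \<in> curve_f f2 f1 a (- b) (- c)"
      using fabc_refl[of x b f2 f1 a c] by (auto simp: mf_RR)
  qed (auto simp: mf_RI mf_IR mf_II)
qed

lemma rp_cl: "rp ` curve_l s t = curve_l s (- t)"
proof (rule set_eqI)
  fix pt :: point
  obtain u v where uv: "pt = (u, v)" by (cases pt)
  show "pt \<in> rp ` curve_l s t \<longleftrightarrow> pt \<in> curve_l s (- t)"
    unfolding rp_image uv by (cases u; cases v) (auto simp: ml_RR ml_RI ml_IR ml_II)
qed

lemma rp_Cminus: "C \<in> Cminus f1 f2 \<Longrightarrow> rp ` C \<in> Cminus f2 f1"
  unfolding Cminus_def using rp_cf rp_cl by fastforce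

lemma rp_par: "parallel (rp q) (rp p) \<longleftrightarrow> parallel q p"
  unfolding parallel_def rp_def by simp

lemma transport:
  assumes "\<exists>D'\<in>Cminus f2 f1. rp p \<in> D' \<and> rp q \<in> D' \<and> rp ` C \<inter> D' = {rp p}"
  shows "\<exists>D\<in>Cminus f1 f2. p \<in> D \<and> q \<in> D \<and> C \<inter> D = {p}"
proof -
  obtain D' where D': "D' \<in> Cminus f2 f1" "rp p \<in> D'" "rp q \<in> D'" "rp ` C \<inter> D' = {rp p}"
    using assms by blast
  have "rp ` (rp ` C \<inter> D') = rp ` (rp ` C) \<inter> rp ` D'" by (rule image_Int[OF rp_inj])
  moreover have "rp ` (rp ` C) = C" by (simp add: image_image)
  ultimately have CD: "C \<inter> rp ` D' = {p}" using D'(4) by simp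
  have qin: "q \<in> rp ` D'" using D'(3) rp_image by simp
  show ?thesis by (rule witness[OF rp_Cminus[OF D'(1)] qin CD])
qed

theorem theorem4p13:
  fixes f1 f2 :: "real \<Rightarrow> real" and C :: "point set" and p q :: point
  assumes "strongly_hyperbolic f1" and "strongly_hyperbolic f2"
    and "C \<in> Cminus f1 f2" and "p \<in> C" and "q \<notin> C" and "\<not> parallel q p"
  shows "\<exists>D \<in> Cminus f1 f2. p \<in> D \<and> q \<in> D \<and> C \<inter> D = {p}"
proof -
  interpret S12: SH f1 f2 by unfold_locales (use assms in auto)
  interpret S21: SH f2 f1 by unfold_locales (use assms in auto)
  obtain u v where uv: "p = (u, v)" by (cases p)
  from assms(3) consider a b c where "a > 0" "C = curve_f f1 f2 a b c" | s t where "s < 0" "C = curve_l s t"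
    unfolding Cminus_def by blast
  then show ?thesis
  proof cases
    case (1 a b c)
    show ?thesis
    proof (cases u; cases v)
      fix x0 y0 assume u: "u = R x0" and v: "v = R y0"
      have x0: "x0 \<noteq> - b" and y0: "y0 = fabc f1 f2 a b c x0"
        using assms(4) 1 uv u v by (auto simp: mf_RR)
      show ?thesis
      proof (cases "x0 > - b")
        case True
        show ?thesis using S12.B3[OF 1(1) True y0, of q] assms(5,6) 1 uv u v by simp
      next
        case False
        then have x0': "- x0 > - (- b)" using x0 by simp
        have y0': "- y0 = fabc f2 f1 a (- b) (- c) (- x0)" using fabc_refl[of "- x0" b f2 f1 a c] y0 x0 by simp
        have q': "rp q \<notin> curve_f f2 f1 a (- b) (- c)"
        proof -
          have "rp q \<notin> rp ` C" using rp_image[of "rp q" C] assms(5) by simp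
          then show ?thesis using 1 rp_cf[of f1 f2 a b c] by simp
        qed
        have np': "\<not> parallel (rp q) (R (- x0), R (- y0))"
          using assms(6) rp_par[of q p] uv u v by simp
        have "\<exists>D'\<in>Cminus f2 f1. rp p \<in> D' \<and> rp q \<in> D' \<and> rp ` C \<inter> D' = {rp p}"
          using S21.B3[OF 1(1) x0' y0' q' np'] 1 uv u v rp_cf[of f1 f2 a b c] by simp
        then show ?thesis by (rule transport)
      qed
    next
      fix x0 assume u: "u = R x0" and v: "v = Infty"
      have "x0 = - b" using assms(4) 1 uv u v by (simp add: mf_RI)
      then show ?thesis using S12.B1[OF 1(1), of q] assms(5,6) 1 uv u v by simp
    next
      fix y0 assume u: "u = Infty" and v: "v = R y0"
      have "y0 = c" using assms(4) 1 uv u v by (simp add: mf_IR)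
      then show ?thesis using S12.B2[OF 1(1), of q] assms(5,6) 1 uv u v by simp
    next
      assume u: "u = Infty" and v: "v = Infty"
      then show ?thesis using assms(4) 1 uv by (simp add: mf_II)
    qed
  next
    case (2 s t)
    show ?thesis
    proof (cases u; cases v)
      fix x0 y0 assume u: "u = R x0" and v: "v = R y0"
      have y0: "y0 = s * x0 + t" using assms(4) 2 uv u v by (simp add: ml_RR)
      show ?thesis using S12.A2[OF 2(1) y0, of q] assms(5,6) 2 uv u v by simp
    next
      fix x0 assume u: "u = R x0" and v: "v = Infty"
      then show ?thesis using assms(4) 2 uv by (simp add: ml_RI)
    next
      fix y0 assume u: "u = Infty" and v: "v = R y0"
      then show ?thesis using assms(4) 2 uv by (simp add: ml_IR)
    next
      assume u: "u = Infty" and v: "v = Infty"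
      then show ?thesis using A1[OF 2(1), of q t f1 f2] assms(5,6) 2 uv by simp
    qed
  qed
qed

end
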